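(* Let $(x_n)_{n\ge1}$ be a sequence of real numbers such that $x_{n+1}-x_n\ge\frac{c\log n}{n}$ for some constant $c>0$, and suppose that for some $\varepsilon_0>0$ and some constant $r>0$ we have, for all $N$, $$E^{*}(X,N,\gamma_N)\ge rN^3,\qquad \gamma_N=\frac{1}{N(\log N)^{1+\varepsilon_0}}.$$ Then there exist increasing sequences of positive integers $(n_k)_{k\ge1}$ and $(a_N)_{N\ge1}$ tending to infinity such that $(n_k)$ has density bounded from below in $\{1,\dots,a_N\}$ (i.e. there is $c'>0$ with $\#\{k:n_k\le a_N\}\ge c'a_N$ for all $N$), and for every $\varepsilon>0$ and almost every $\alpha\in\mathbb{R}$, $$\min\big\{\|\alpha x_{n_k}-\alpha x_{n_l}\| : k\ne l,\ n_k,n_l\le a_N\big\}\gg\frac{1}{a_N(\log a_N)^{1+\varepsilon}}.$$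
   Context: $E^{*}(X,N,\gamma)=\#\{(n_1,n_2,n_3,n_4)\in[1,N]^4 : |x_{n_1}+x_{n_2}-x_{n_3}-x_{n_4}|<\gamma\}$ is the additive energy of $X=(x_n)$ at scale $\gamma$. For $x\in\mathbb{R}$, $\|x\|=\min_{k\in\mathbb{Z}}|x-k|$. The implied constant in the conclusion may depend on $\alpha$ and $\varepsilon$. *)

theory Defs
  imports "HOL-Analysis.Analysis"
begin

definition dist_int :: "real \<Rightarrow> real" where
  "dist_int x = (INF k::int. \<bar>x - of_int k\<bar>)"

definition add_energy :: "(nat \<Rightarrow> real) \<Rightarrow> nat \<Rightarrow> real \<Rightarrow> nat" where
  "add_energy x N \<gamma> = card {(n1, n2, n3, n4). n1 \<in> {1..N} \<and> n2 \<in> {1..N} \<and> n3 \<in> {1..N} \<and> n4 \<in> {1..N}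
       \<and> \<bar>x n1 + x n2 - x n3 - x n4\<bar> < \<gamma>}"

end

theory Submission
  imports Defs "HOL-Analysis.Analysis"
begin

lemma card_dc1:
  assumes "finite A" "finite B"
  shows "card {p \<in> A \<times> B. R (fst p) (snd p)} = (\<Sum>a\<in>A. card {b\<in>B. R a b})"
proof -
  have "{p \<in> A \<times> B. R (fst p) (snd p)} = (SIGMA a:A. {b\<in>B. R a b})" by auto
  then show ?thesis using assms by simp
qed

lemma card_dc2:
  assumes "finite A" "finite B"
  shows "card {p \<in> A \<times> B. R (fst p) (snd p)} = (\<Sum>b\<in>B. card {a\<in>A. R a b})"
proof -
  have "card {p \<in> A \<times> B. R (fst p) (snd p)} = card {p \<in> B \<times> A. R (snd p) (fst p)}"
    by (rule bij_betw_same_card[of "\<lambda>(a,b). (b,a)"]) (auto simp: bij_betw_def inj_on_def image_def)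
  also have "\<dots> = (\<Sum>b\<in>B. card {a\<in>A. R a b})"
    using card_dc1[OF assms(2,1), of "\<lambda>b a. R a b"] by simp
  finally show ?thesis .
qed


lemma exists_ge_avg:
  fixes f :: "'a \<Rightarrow> real"
  assumes "finite B" "B \<noteq> {}" "sum f B \<ge> real (card B) * t"
  shows "\<exists>b\<in>B. f b \<ge> t"
proof (rule ccontr)
  assume "\<not> ?thesis"
  then have "\<And>b. b \<in> B \<Longrightarrow> f b < t" by auto
  then have "sum f B < of_nat (card B) * t"
    by (rule sum_bounded_above_strict) (use assms in auto)
  with assms show False by simp
qed

lemma path3:
  fixes G :: "('a \<times> 'b) set" and \<delta> :: real
  assumes fA: "finite A" and fB: "finite B" and GAB: "G \<subseteq> A \<times> B" and dpos: "0 < \<delta>"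
    and big: "real (card G) \<ge> \<delta> * card A * card B" and ne: "A \<noteq> {}" "B \<noteq> {}"
  shows "\<exists>U W. U \<subseteq> A \<and> W \<subseteq> B \<and> real (card U) \<ge> \<delta> * card A / 6 \<and> real (card W) \<ge> \<delta> * card B / 4 \<and>
     (\<forall>u\<in>U. \<forall>w\<in>W. real (card {(b,a). b\<in>B \<and> a\<in>A \<and> (u,b)\<in>G \<and> (a,b)\<in>G \<and> (a,w)\<in>G})
         \<ge> \<delta>^5 * card A * card B / 3072)"
proof -
  have False: "\<not> (A = {} \<or> B = {})" using ne by auto
  define nA where "nA = real (card A)"
  define nB where "nB = real (card B)"
  have nApos: "nA > 0" and nBpos: "nB > 0" using False fA fB by (auto simp: nA_def nB_def card_gt_0_iff)
  define deg where "deg a = card {b\<in>B. (a,b)\<in>G}" for a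
  define A1 where "A1 = {a\<in>A. real (deg a) \<ge> \<delta> * nB / 2}"
  have fA1: "finite A1" "A1 \<subseteq> A" using fA by (auto simp: A1_def)
  have Gcard: "card G = (\<Sum>a\<in>A. deg a)"
  proof -
    have "G = {p \<in> A \<times> B. (fst p, snd p) \<in> G}" using GAB by auto
    then show ?thesis unfolding deg_def using card_dc1[OF fA fB, of "\<lambda>a b. (a,b) \<in> G"] by simp
  qed
  have s1: "(\<Sum>a\<in>A-A1. real (deg a)) \<le> nA * (\<delta> * nB / 2)"
  proof -
    have "(\<Sum>a\<in>A-A1. real (deg a)) \<le> (\<Sum>a\<in>A-A1. \<delta> * nB / 2)"
      by (rule sum_mono) (auto simp: A1_def)
    also have "\<dots> = real (card (A - A1)) * (\<delta> * nB / 2)" by simp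
    also have "\<dots> \<le> nA * (\<delta> * nB / 2)"
      unfolding nA_def using dpos nBpos fA by (intro mult_right_mono) (auto intro: card_mono)
    finally show ?thesis .
  qed
  have s2: "(\<Sum>a\<in>A1. real (deg a)) \<ge> \<delta> * nA * nB / 2"
  proof -
    have "(\<Sum>a\<in>A. real (deg a)) = (\<Sum>a\<in>A1. real (deg a)) + (\<Sum>a\<in>A-A1. real (deg a))"
      using sum.subset_diff[OF fA1(2) fA, of "\<lambda>a. real (deg a)"] by linarith
    moreover have "(\<Sum>a\<in>A. real (deg a)) \<ge> \<delta> * nA * nB"
      using big Gcard unfolding nA_def nB_def by simp
    ultimately show ?thesis using s1 by (simp add: algebra_simps)
  qed
  define Ub where "Ub b = {a\<in>A1. (a,b)\<in>G}" for b
  have sumUb: "(\<Sum>b\<in>B. real (card (Ub b))) = (\<Sum>a\<in>A1. real (deg a))"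
  proof -
    have "(\<Sum>b\<in>B. card (Ub b)) = card {p \<in> A1 \<times> B. (fst p, snd p) \<in> G}"
      unfolding Ub_def using card_dc2[OF fA1(1) fB, of "\<lambda>a b. (a,b)\<in>G"] by simp
    also have "\<dots> = (\<Sum>a\<in>A1. deg a)"
      unfolding deg_def using card_dc1[OF fA1(1) fB, of "\<lambda>a b. (a,b)\<in>G"] by simp
    finally show ?thesis by (metis of_nat_sum)
  qed
  have sq: "(\<Sum>b\<in>B. real (card (Ub b))^2) \<ge> \<delta>^2 * nA^2 * nB / 4"
  proof -
    have "(\<Sum>b\<in>B. real (card (Ub b)))^2 \<le> (\<Sum>b\<in>B. real (card (Ub b))^2) * nB"
      unfolding nB_def by (rule sum_squared_le_sum_of_squares)
    moreover have "(\<Sum>b\<in>B. real (card (Ub b)))^2 \<ge> (\<delta> * nA * nB / 2)^2"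
      using s2 sumUb dpos nApos nBpos by (intro power_mono) auto
    ultimately have "(\<delta> * nA * nB / 2)^2 \<le> (\<Sum>b\<in>B. real (card (Ub b))^2) * nB" by linarith
    then have "(\<delta>^2 * nA^2 * nB / 4) * nB \<le> (\<Sum>b\<in>B. real (card (Ub b))^2) * nB"
      by (simp add: power2_eq_square algebra_simps)
    then show ?thesis using nBpos by simp
  qed
  define \<tau> where "\<tau> = \<delta>^3 / 128"
  define com where "com a1 a2 = {b\<in>B. (a1,b)\<in>G \<and> (a2,b)\<in>G}" for a1 a2
  define bad where "bad = {p \<in> A1 \<times> A1. real (card (com (fst p) (snd p))) < \<tau> * nB}"
  define badb where "badb b = {p \<in> bad. b \<in> com (fst p) (snd p)}" for b
  have fbad: "finite bad" using fA1 by (auto simp: bad_def intro: finite_subset[of _ "A1 \<times> A1"])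
  have sumbad: "(\<Sum>b\<in>B. real (card (badb b))) \<le> nA^2 * \<tau> * nB"
  proof -
    have "(\<Sum>b\<in>B. card (badb b)) = card {q \<in> bad \<times> B. snd q \<in> com (fst (fst q)) (snd (fst q))}"
      unfolding badb_def using card_dc2[OF fbad fB, of "\<lambda>p b. b \<in> com (fst p) (snd p)"] by simp
    also have "\<dots> = (\<Sum>p\<in>bad. card {b\<in>B. b \<in> com (fst p) (snd p)})"
      using card_dc1[OF fbad fB, of "\<lambda>p b. b \<in> com (fst p) (snd p)"] by simp
    also have "\<dots> = (\<Sum>p\<in>bad. card (com (fst p) (snd p)))"
      by (intro sum.cong) (auto simp: com_def)
    finally have "(\<Sum>b\<in>B. real (card (badb b))) = (\<Sum>p\<in>bad. real (card (com (fst p) (snd p))))"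
      by (metis of_nat_sum)
    also have "\<dots> \<le> (\<Sum>p\<in>bad. \<tau> * nB)"
      by (rule sum_mono) (auto simp: bad_def)
    also have "\<dots> = real (card bad) * (\<tau> * nB)" by simp
    also have "\<dots> \<le> nA^2 * (\<tau> * nB)"
    proof (rule mult_right_mono)
      have "card bad \<le> card (A \<times> A)"
        using fA fA1 by (intro card_mono) (auto simp: bad_def)
      then show "real (card bad) \<le> nA^2" by (simp add: nA_def card_cartesian_product power2_eq_square flip: of_nat_mult)
      show "0 \<le> \<tau> * nB" using dpos nBpos by (simp add: \<tau>_def)
    qed
    finally show ?thesis by simp
  qed
  have "\<exists>b\<in>B. real (card (Ub b))^2 - (16/\<delta>) * real (card (badb b)) \<ge> \<delta>^2 * nA^2 / 8"
  proof (rule exists_ge_avg[OF fB])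
    show "B \<noteq> {}" using False by auto
    have e1: "(\<Sum>b\<in>B. real (card (Ub b))^2 - (16/\<delta>) * real (card (badb b)))
        = (\<Sum>b\<in>B. real (card (Ub b))^2) - (16/\<delta>) * (\<Sum>b\<in>B. real (card (badb b)))"
      by (simp add: sum_subtractf sum_distrib_left)
    have e2: "(16/\<delta>) * (\<Sum>b\<in>B. real (card (badb b))) \<le> (16/\<delta>) * (nA^2 * \<tau> * nB)"
      using sumbad dpos by (intro mult_left_mono) auto
    have e3: "\<delta>^2 * nA^2 * nB / 4 - (16/\<delta>) * (nA^2 * \<tau> * nB) = nB * (\<delta>^2 * nA^2 / 8)"
      using dpos by (simp add: \<tau>_def field_simps power2_eq_square power3_eq_cube)
    have "(\<Sum>b\<in>B. real (card (Ub b))^2 - (16/\<delta>) * real (card (badb b))) \<ge> nB * (\<delta>^2 * nA^2 / 8)"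
      using e1 e2 e3 sq by linarith
    then show "(\<Sum>b\<in>B. real (card (Ub b))^2 - (16/\<delta>) * real (card (badb b))) \<ge> real (card B) * (\<delta>^2 * nA^2 / 8)"
      by (simp add: nB_def)
  qed
  then obtain b0 where b0: "b0 \<in> B" and b0ineq: "real (card (Ub b0))^2 - (16/\<delta>) * real (card (badb b0)) \<ge> \<delta>^2 * nA^2 / 8"
    by blast
  define U where "U = Ub b0"
  have UA1: "U \<subseteq> A1" and fU: "finite U" using fA1 by (auto simp: U_def Ub_def)
  define nU where "nU = real (card U)"
  have h0: "0 \<le> \<delta>^2 * nA^2" by simp
  have U2: "nU^2 \<ge> \<delta>^2 * nA^2 / 8"
  proof -
    have "(16/\<delta>) * real (card (badb b0)) \<ge> 0" using dpos by simp
    then show ?thesis using b0ineq unfolding nU_def U_def by linarith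
  qed
  have badU: "real (card (badb b0)) \<le> \<delta> * nU^2 / 16"
  proof -
    have "(16/\<delta>) * real (card (badb b0)) \<le> nU^2" using b0ineq h0 unfolding nU_def U_def by linarith
    then show ?thesis using dpos by (simp add: field_simps)
  qed
  have nUge: "nU \<ge> \<delta> * nA / 3"
  proof (rule power2_le_imp_le)
    have "(\<delta> * nA / 3)^2 = \<delta>^2 * nA^2 / 9" by (simp add: power_mult_distrib power_divide)
    then show "(\<delta> * nA / 3)^2 \<le> nU^2" using U2 h0 by linarith
    show "0 \<le> nU" by (simp add: nU_def)
  qed
  have "\<delta> * nA / 3 > 0" using dpos nApos by simp
  then have nUpos: "nU > 0" using nUge by linarith
  define badp where "badp u = {u2\<in>U. (u,u2) \<in> bad}" for u
  define U' where "U' = {u\<in>U. real (card (badp u)) \<le> \<delta> * nU / 8}"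
  have badUU: "real (card {p \<in> U \<times> U. (fst p, snd p) \<in> bad}) \<le> \<delta> * nU^2 / 16"
  proof -
    have "card {p \<in> U \<times> U. (fst p, snd p) \<in> bad} \<le> card (badb b0)"
      using fbad b0 by (intro card_mono) (auto simp: badb_def U_def Ub_def com_def)
    then show ?thesis using badU by linarith
  qed
  have cU': "real (card U') \<ge> nU / 2"
  proof -
    have "card {p \<in> U \<times> U. (fst p, snd p) \<in> bad} = (\<Sum>u\<in>U. card (badp u))"
      unfolding badp_def using card_dc1[OF fU fU, of "\<lambda>a b. (a,b)\<in>bad"] by simp
    then have "real (card {p \<in> U \<times> U. (fst p, snd p) \<in> bad}) = (\<Sum>u\<in>U. real (card (badp u)))"
      by simp
    also have "\<dots> \<ge> (\<Sum>u\<in>U-U'. real (card (badp u)))"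
      using fU by (intro sum_mono2) auto
    also have "(\<Sum>u\<in>U-U'. real (card (badp u))) \<ge> (\<Sum>u\<in>U-U'. \<delta> * nU / 8)"
      by (intro sum_mono) (auto simp: U'_def)
    finally have "(\<Sum>u\<in>U-U'. \<delta> * nU / 8) \<le> real (card {p \<in> U \<times> U. (fst p, snd p) \<in> bad})" .
    then have "real (card (U-U')) * (\<delta> * nU / 8) \<le> real (card {p \<in> U \<times> U. (fst p, snd p) \<in> bad})"
      by simp
    then have "real (card (U-U')) * (\<delta> * nU / 8) \<le> \<delta> * nU^2 / 16"
      using badUU by linarith
    then have "real (card (U-U')) * (\<delta> * nU / 8) \<le> (nU / 2) * (\<delta> * nU / 8)"
      by (simp add: power2_eq_square field_simps)
    then have "real (card (U-U')) \<le> nU / 2"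
      using dpos nUpos by (simp add: mult_le_cancel_right)
    moreover have "card (U - U') = card U - card U'" using fU by (intro card_Diff_subset) (auto simp: U'_def intro: finite_subset)
    moreover have "card U' \<le> card U" using fU by (intro card_mono) (auto simp: U'_def)
    ultimately show ?thesis by (simp add: nU_def of_nat_diff)
  qed
  define W where "W = {w\<in>B. real (card {u\<in>U. (u,w)\<in>G}) \<ge> \<delta> * nU / 4}"
  have fW: "finite W" "W \<subseteq> B" using fB by (auto simp: W_def)
  have cW: "real (card W) \<ge> \<delta> * nB / 4"
  proof -
    define f where "f w = real (card {u\<in>U. (u,w)\<in>G})" for w
    have "(\<Sum>w\<in>B. card {u\<in>U. (u,w)\<in>G}) = (\<Sum>u\<in>U. deg u)"
      unfolding deg_def by (rule trans[OF card_dc2[OF fU fB, of "\<lambda>a b. (a,b)\<in>G", symmetric] card_dc1[OF fU fB, of "\<lambda>a b. (a,b)\<in>G"]])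
    then have "real (\<Sum>w\<in>B. card {u\<in>U. (u,w)\<in>G}) = real (\<Sum>u\<in>U. deg u)" by (rule arg_cong)
    then have "sum f B = (\<Sum>u\<in>U. real (deg u))" unfolding f_def of_nat_sum .
    also have "\<dots> \<ge> (\<Sum>u\<in>U. \<delta> * nB / 2)"
      using UA1 by (intro sum_mono) (auto simp: A1_def)
    finally have lo: "sum f B \<ge> nU * (\<delta> * nB / 2)" by (simp add: nU_def)
    have "sum f B = sum f W + sum f (B - W)"
      using sum.subset_diff[OF fW(2) fB, of f] by linarith
    moreover have "sum f W \<le> real (card W) * nU"
    proof -
      have cc: "card {u\<in>U. (u,w)\<in>G} \<le> card U" for w by (rule card_mono[OF fU]) auto
      have "sum f W \<le> (\<Sum>w\<in>W. nU)"
        unfolding f_def nU_def by (intro sum_mono) (simp add: cc)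
      then show ?thesis by simp
    qed
    moreover have "sum f (B - W) \<le> nB * (\<delta> * nU / 4)"
    proof -
      have "sum f (B - W) \<le> (\<Sum>w\<in>B-W. \<delta> * nU / 4)"
        by (intro sum_mono) (auto simp: W_def f_def)
      also have "\<dots> = real (card (B - W)) * (\<delta> * nU / 4)" by simp
      also have "\<dots> \<le> nB * (\<delta> * nU / 4)"
        unfolding nB_def using dpos nUpos by (intro mult_right_mono) (simp_all add: card_mono[OF fB])
      finally show ?thesis .
    qed
    ultimately have "real (card W) * nU \<ge> (\<delta> * nB / 4) * nU"
      using lo by (simp add: algebra_simps)
    then show ?thesis using nUpos by (simp add: mult_le_cancel_right)
  qed
  have paths: "real (card {(b,a). b\<in>B \<and> a\<in>A \<and> (u,b)\<in>G \<and> (a,b)\<in>G \<and> (a,w)\<in>G})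
         \<ge> \<delta>^5 * nA * nB / 3072" if u: "u \<in> U'" and w: "w \<in> W" for u w
  proof -
    define good where "good = {a\<in>U. (a,w)\<in>G \<and> (u,a) \<notin> bad}"
    have fgood: "finite good" "good \<subseteq> U" using fU by (auto simp: good_def)
    have "card {a\<in>U. (a,w)\<in>G} \<le> card (good \<union> badp u)"
      by (rule card_mono) (use fU in \<open>auto simp: good_def badp_def\<close>)
    also have "\<dots> \<le> card good + card (badp u)" by (rule card_Un_le)
    finally have "card {a\<in>U. (a,w)\<in>G} \<le> card good + card (badp u)" .
    moreover have "real (card {a\<in>U. (a,w)\<in>G}) \<ge> \<delta> * nU / 4" using w by (simp add: W_def)
    moreover have "real (card (badp u)) \<le> \<delta> * nU / 8" using u by (simp add: U'_def)
    ultimately have cgood: "real (card good) \<ge> \<delta> * nU / 8" by linarith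
    have uA1: "u \<in> A1" using u UA1 by (auto simp: U'_def)
    have comge: "real (card (com u a)) \<ge> \<tau> * nB" if "a \<in> good" for a
      using that uA1 UA1 by (auto simp: good_def bad_def)
    define Pw where "Pw = {p \<in> B \<times> good. (u, fst p)\<in>G \<and> (snd p, fst p)\<in>G}"
    have "card Pw = (\<Sum>a\<in>good. card {b\<in>B. (u,b)\<in>G \<and> (a,b)\<in>G})"
      unfolding Pw_def using card_dc2[OF fB fgood(1), of "\<lambda>b a. (u,b)\<in>G \<and> (a,b)\<in>G"] by simp
    also have "\<dots> = (\<Sum>a\<in>good. card (com u a))" by (simp add: com_def)
    finally have "real (card Pw) = (\<Sum>a\<in>good. real (card (com u a)))" by simp
    also have "\<dots> \<ge> (\<Sum>a\<in>good. \<tau> * nB)" by (intro sum_mono comge)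
    finally have cPw: "real (card Pw) \<ge> real (card good) * (\<tau> * nB)" by simp
    have "Pw \<subseteq> {(b,a). b\<in>B \<and> a\<in>A \<and> (u,b)\<in>G \<and> (a,b)\<in>G \<and> (a,w)\<in>G}"
      using fgood UA1 fA1 by (auto simp: Pw_def good_def)
    moreover have "finite {(b,a). b\<in>B \<and> a\<in>A \<and> (u,b)\<in>G \<and> (a,b)\<in>G \<and> (a,w)\<in>G}"
      by (rule finite_subset[of _ "B \<times> A"]) (use fA fB in auto)
    ultimately have "card Pw \<le> card {(b,a). b\<in>B \<and> a\<in>A \<and> (u,b)\<in>G \<and> (a,b)\<in>G \<and> (a,w)\<in>G}"
      by (rule card_mono[rotated])
    moreover have "real (card good) * (\<tau> * nB) \<ge> (\<delta> * (\<delta> * nA / 3) / 8) * (\<tau> * nB)"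
    proof (rule mult_right_mono)
      have "\<delta> * (\<delta> * nA / 3) \<le> \<delta> * nU" using nUge dpos by (intro mult_left_mono) auto
      then show "\<delta> * (\<delta> * nA / 3) / 8 \<le> real (card good)"
        using cgood by linarith
      show "0 \<le> \<tau> * nB" using dpos nBpos by (simp add: \<tau>_def)
    qed
    moreover have "(\<delta> * (\<delta> * nA / 3) / 8) * (\<tau> * nB) = \<delta>^5 * nA * nB / 3072"
      by (simp add: \<tau>_def power_def eval_nat_numeral field_simps)
    ultimately show ?thesis using cPw by linarith
  qed
  show ?thesis
  proof (intro exI conjI)
    show "U' \<subseteq> A" using UA1 fA1 by (auto simp: U'_def)
    show "W \<subseteq> B" by (rule fW)
    show "real (card U') \<ge> \<delta> * card A / 6" using cU' nUge by (simp add: nA_def)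
    show "real (card W) \<ge> \<delta> * card B / 4" using cW by (simp add: nB_def)
    show "\<forall>u\<in>U'. \<forall>w\<in>W. real (card {(b,a). b\<in>B \<and> a\<in>A \<and> (u,b)\<in>G \<and> (a,b)\<in>G \<and> (a,w)\<in>G})
         \<ge> \<delta>^5 * card A * card B / 3072" using paths by (simp add: nA_def nB_def)
  qed
qed

definition bsgK :: "real \<Rightarrow> real" where
  "bsgK \<kappa> = (8 / (\<kappa>^3 * ((\<kappa>/2)^5/3072)))^2 * (8/\<kappa>)"

lemma bsg_int:
  fixes Y :: "int set" and s :: int and \<kappa> :: real
  assumes fY: "finite Y" and neY: "Y \<noteq> {}" and kpos: "\<kappa> > 0"
    and Q: "real (card {(a,b,c,d). a\<in>Y \<and> b\<in>Y \<and> c\<in>Y \<and> d\<in>Y \<and> a+b = c+d+s}) \<ge> \<kappa> * card Y ^ 3"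
  shows "\<exists>U \<subseteq> Y. real (card U) \<ge> \<kappa> * card Y / 12 \<and>
           real (card {u1 - u2 | u1 u2. u1\<in>U \<and> u2\<in>U}) \<le> bsgK \<kappa> * card Y"
proof -
  define n where "n = real (card Y)"
  have npos: "n > 0" using fY neY by (simp add: n_def card_gt_0_iff)
  define R where "R v = {(a,b). a\<in>Y \<and> b\<in>Y \<and> a+b=v}" for v
  have fR: "finite (R v)" for v by (rule finite_subset[of _ "Y\<times>Y"]) (auto simp: R_def fY)
  define P where "P = {v \<in> (\<lambda>(a,b). a+b) ` (Y\<times>Y). real (card (R v)) \<ge> \<kappa> * n / 2}"
  have fP: "finite P" using fY by (auto simp: P_def)
  have cP: "real (card P) \<le> 2 * n / \<kappa>"
  proof -
    have "card (\<Union>v\<in>P. R v) = (\<Sum>v\<in>P. card (R v))"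
      by (rule card_UN_disjoint) (auto simp: fP fR[unfolded R_def] R_def)
    moreover have "card (\<Union>v\<in>P. R v) \<le> card (Y \<times> Y)"
      by (rule card_mono) (auto simp: R_def fY)
    ultimately have "(\<Sum>v\<in>P. card (R v)) \<le> card Y * card Y"
      by (simp add: card_cartesian_product)
    then have "real (\<Sum>v\<in>P. card (R v)) \<le> n * n" unfolding n_def by (metis of_nat_le_iff of_nat_mult)
    moreover have "real (\<Sum>v\<in>P. card (R v)) \<ge> (\<Sum>v\<in>P. \<kappa> * n / 2)"
      unfolding of_nat_sum by (intro sum_mono) (auto simp: P_def)
    ultimately have "real (card P) * (\<kappa> * n / 2) \<le> n * n" by simp
    then have "real (card P) * \<kappa> \<le> 2 * n" using npos by (simp add: field_simps)
    then show ?thesis using kpos by (simp add: field_simps)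
  qed
  define G where "G = {(a,b). a\<in>Y \<and> b\<in>Y \<and> a+b \<in> P}"
  have GY: "G \<subseteq> Y \<times> Y" by (auto simp: G_def)
  have fG: "finite G" using GY fY by (meson finite_SigmaI finite_subset)
  define T where "T = {(a,b,c,d). a\<in>Y \<and> b\<in>Y \<and> c\<in>Y \<and> d\<in>Y \<and> a+b = c+d+s}"
  define T1 where "T1 = {(a,b,c,d). a\<in>Y \<and> b\<in>Y \<and> c\<in>Y \<and> d\<in>Y \<and> a+b = c+d+s \<and> a+b \<in> P}"
  define T2 where "T2 = {(a,b,c,d). a\<in>Y \<and> b\<in>Y \<and> c\<in>Y \<and> d\<in>Y \<and> a+b = c+d+s \<and> a+b \<notin> P}"
  have TT: "T = T1 \<union> T2" by (auto simp: T_def T1_def T2_def)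
  have fT1: "finite T1"
    by (rule finite_subset[of _ "Y\<times>Y\<times>Y\<times>Y"]) (auto simp: T1_def fY)
  have fT2: "finite T2"
    by (rule finite_subset[of _ "Y\<times>Y\<times>Y\<times>Y"]) (auto simp: T2_def fY)
  have cT1: "card T1 \<le> card G * card Y"
  proof -
    have "T1 \<subseteq> (\<lambda>((a,b),c). (a,b,c,a+b-c-s)) ` (G \<times> Y)"
    proof
      fix q assume "q \<in> T1"
      then obtain a b c d where q: "q = (a,b,c,d)" "a\<in>Y" "b\<in>Y" "c\<in>Y" "d\<in>Y" "a+b=c+d+s" "a+b\<in>P"
        by (auto simp: T1_def)
      then have "((a,b),c) \<in> G \<times> Y" "d = a+b-c-s" by (auto simp: G_def)
      then show "q \<in> (\<lambda>((a,b),c). (a,b,c,a+b-c-s)) ` (G \<times> Y)" using q(1) by force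
    qed
    then have "card T1 \<le> card ((\<lambda>((a,b),c). (a,b,c,a+b-c-s)) ` (G \<times> Y))"
      by (intro card_mono) (auto simp: fG fY)
    also have "\<dots> \<le> card (G \<times> Y)" by (rule card_image_le) (auto simp: fG fY)
    finally show ?thesis by (simp add: card_cartesian_product)
  qed
  have cT2: "real (card T2) \<le> n * n * (\<kappa> * n / 2)"
  proof -
    define F where "F cd = {ab. ab \<in> R (fst cd + snd cd + s) \<and> fst cd + snd cd + s \<notin> P}" for cd
    have "T2 \<subseteq> (\<lambda>(cd,ab). (fst ab, snd ab, fst cd, snd cd)) ` (SIGMA cd:Y\<times>Y. F cd)"
    proof
      fix q assume "q \<in> T2"
      then obtain a b c d where q: "q = (a,b,c,d)" "a\<in>Y" "b\<in>Y" "c\<in>Y" "d\<in>Y" "a+b=c+d+s" "a+b\<notin>P"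
        by (auto simp: T2_def)
      then have "((c,d),(a,b)) \<in> (SIGMA cd:Y\<times>Y. F cd)" by (auto simp: F_def R_def)
      then show "q \<in> (\<lambda>(cd,ab). (fst ab, snd ab, fst cd, snd cd)) ` (SIGMA cd:Y\<times>Y. F cd)"
        using q(1) by force
    qed
    have fF: "finite (F cd)" for cd by (rule finite_subset[OF _ fR[of "fst cd + snd cd + s"]]) (auto simp: F_def)
    have "card T2 \<le> card ((\<lambda>(cd,ab). (fst ab, snd ab, fst cd, snd cd)) ` (SIGMA cd:Y\<times>Y. F cd))"
      using \<open>T2 \<subseteq> _\<close> by (intro card_mono) (auto simp: fY fF)
    also have "\<dots> \<le> card (SIGMA cd:Y\<times>Y. F cd)" by (rule card_image_le) (auto simp: fY fF)
    also have "\<dots> = (\<Sum>cd\<in>Y\<times>Y. card (F cd))" by (simp add: fY fF)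
    finally have "real (card T2) \<le> (\<Sum>cd\<in>Y\<times>Y. real (card (F cd)))" by (simp flip: of_nat_sum)
    also have "\<dots> \<le> (\<Sum>cd\<in>Y\<times>Y. \<kappa> * n / 2)"
    proof (rule sum_mono)
      fix cd assume "cd \<in> Y \<times> Y"
      show "real (card (F cd)) \<le> \<kappa> * n / 2"
      proof (cases "fst cd + snd cd + s \<in> P")
        case True then show ?thesis using kpos npos by (simp add: F_def)
      next
        case False
        then have "F cd = R (fst cd + snd cd + s)" by (simp add: F_def)
        moreover have "real (card (R (fst cd + snd cd + s))) \<le> \<kappa> * n / 2"
        proof (cases "fst cd + snd cd + s \<in> (\<lambda>(a,b). a+b) ` (Y\<times>Y)")
          case True then show ?thesis using False by (simp add: P_def)
        next
          case False2: False
          then have "R (fst cd + snd cd + s) = {}" unfolding R_def by (auto simp: image_iff) (metis SigmaI case_prod_conv)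
          then show ?thesis using kpos npos by simp
        qed
        ultimately show ?thesis by simp
      qed
    qed
    also have "\<dots> = n * n * (\<kappa> * n / 2)" by (simp add: n_def card_cartesian_product)
    finally show ?thesis .
  qed
  have cG: "real (card G) \<ge> (\<kappa>/2) * card Y * card Y"
  proof -
    have "card T \<le> card T1 + card T2" unfolding TT by (rule card_Un_le)
    then have "real (card T) \<le> real (card G) * n + n * n * (\<kappa> * n / 2)"
      using cT1 cT2 unfolding n_def by (smt (verit) of_nat_add of_nat_le_iff of_nat_mult)
    moreover have "real (card T) \<ge> \<kappa> * n^3" using Q by (simp add: T_def n_def)
    ultimately have "real (card G) * n \<ge> (\<kappa>/2 * n * n) * n"
      by (simp add: power3_eq_cube algebra_simps)
    then show ?thesis using npos by (simp add: n_def mult_le_cancel_right)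
  qed
  define \<theta> where "\<theta> = (\<kappa>/2)^5/3072"
  have thpos: "\<theta> > 0" using kpos by (simp add: \<theta>_def)
  obtain U' W where UY: "U' \<subseteq> Y" and WY: "W \<subseteq> Y" and cU: "real (card U') \<ge> (\<kappa>/2) * card Y / 6"
    and cW: "real (card W) \<ge> (\<kappa>/2) * card Y / 4"
    and paths: "\<forall>u\<in>U'. \<forall>w\<in>W. real (card {(b,a). b\<in>Y \<and> a\<in>Y \<and> (u,b)\<in>G \<and> (a,b)\<in>G \<and> (a,w)\<in>G})
         \<ge> (\<kappa>/2)^5 * card Y * card Y / 3072"
    using path3[OF fY fY GY _ cG neY neY] kpos by auto
  have fU: "finite U'" "finite W" using UY WY fY by (auto intro: finite_subset)
  define S where "S = {u + w | u w. u\<in>U' \<and> w\<in>W}"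
  have fS: "finite S"
  proof -
    have "S = (\<lambda>(u,w). u + w) ` (U' \<times> W)" by (auto simp: S_def)
    then show ?thesis using fU by simp
  qed
  define Trip where "Trip v = {t \<in> P \<times> P \<times> P. fst t - fst (snd t) + snd (snd t) = v}" for v
  have fTrip: "finite (Trip v)" for v using fP by (auto simp: Trip_def)
  have cTrip: "real (card (Trip v)) \<ge> \<theta> * n * n" if "v \<in> S" for v
  proof -
    obtain u w where uw: "u \<in> U'" "w \<in> W" "v = u + w" using \<open>v \<in> S\<close> by (auto simp: S_def)
    define Pa where "Pa = {(b,a). b\<in>Y \<and> a\<in>Y \<and> (u,b)\<in>G \<and> (a,b)\<in>G \<and> (a,w)\<in>G}"
    have "inj_on (\<lambda>(b,a). (u+b, a+b, a+w)) Pa" by (auto simp: inj_on_def Pa_def)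
    moreover have "(\<lambda>(b,a). (u+b, a+b, a+w)) ` Pa \<subseteq> Trip v"
      using uw by (auto simp: Pa_def Trip_def G_def)
    ultimately have "card Pa \<le> card (Trip v)" using fTrip by (rule card_inj_on_le)
    moreover have "real (card Pa) \<ge> \<theta> * n * n" using paths uw by (simp add: Pa_def \<theta>_def n_def)
    ultimately show ?thesis by linarith
  qed
  have cS: "real (card S) * (\<theta> * n * n) \<le> (2 * n / \<kappa>)^3"
  proof -
    have "card (\<Union>v\<in>S. Trip v) = (\<Sum>v\<in>S. card (Trip v))"
      by (rule card_UN_disjoint) (auto simp: fS fTrip[unfolded Trip_def] Trip_def)
    moreover have "card (\<Union>v\<in>S. Trip v) \<le> card (P \<times> P \<times> P)"
      by (rule card_mono) (auto simp: fP Trip_def)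
    ultimately have "(\<Sum>v\<in>S. card (Trip v)) \<le> card P * card P * card P"
      by (simp add: card_cartesian_product)
    then have "real (\<Sum>v\<in>S. card (Trip v)) \<le> real (card P) * real (card P) * real (card P)"
      by (metis of_nat_le_iff of_nat_mult)
    also have "\<dots> = real (card P) ^ 3" by (simp add: power3_eq_cube)
    also have "\<dots> \<le> (2 * n / \<kappa>)^3" using cP by (intro power_mono) auto
    finally have "real (\<Sum>v\<in>S. card (Trip v)) \<le> (2 * n / \<kappa>)^3" .
    moreover have "real (\<Sum>v\<in>S. card (Trip v)) \<ge> (\<Sum>v\<in>S. \<theta> * n * n)"
      unfolding of_nat_sum by (intro sum_mono cTrip)
    ultimately show ?thesis by simp
  qed
  define D where "D = {u1 - u2 | u1 u2. u1\<in>U' \<and> u2\<in>U'}"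
  have fD: "finite D"
  proof -
    have "D = (\<lambda>(u,w). u - w) ` (U' \<times> U')" by (auto simp: D_def)
    then show ?thesis using fU by simp
  qed
  have "\<forall>d\<in>D. \<exists>p. fst p \<in> U' \<and> snd p \<in> U' \<and> d = fst p - snd p"
  proof
    fix d assume "d \<in> D"
    then obtain u1 u2 where "u1 \<in> U'" "u2 \<in> U'" "d = u1 - u2" by (auto simp: D_def)
    then show "\<exists>p. fst p \<in> U' \<and> snd p \<in> U' \<and> d = fst p - snd p" by (intro exI[of _ "(u1,u2)"]) auto
  qed
  then have "\<exists>g. \<forall>d\<in>D. fst (g d) \<in> U' \<and> snd (g d) \<in> U' \<and> d = fst (g d) - snd (g d)"
    by (rule bchoice)
  then obtain g where g: "\<forall>d\<in>D. fst (g d) \<in> U' \<and> snd (g d) \<in> U' \<and> d = fst (g d) - snd (g d)"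
    by blast
  define f1 where "f1 d = fst (g d)" for d
  define f2 where "f2 d = snd (g d)" for d
  have f12: "\<And>d. d \<in> D \<Longrightarrow> f1 d \<in> U' \<and> f2 d \<in> U' \<and> d = f1 d - f2 d"
    using g by (simp add: f1_def f2_def)
  have ruzsa: "card W * card D \<le> card S * card S"
  proof -
    have "inj_on (\<lambda>(w,d). (f1 d + w, f2 d + w)) (W \<times> D)"
    proof (rule inj_onI, clarsimp)
      fix w d w' d' assume a: "w \<in> W" "d \<in> D" "w' \<in> W" "d' \<in> D"
        "f1 d + w = f1 d' + w'" "f2 d + w = f2 d' + w'"
      have "f1 d - f2 d = f1 d' - f2 d'" using a(5,6) by linarith
      then have "d = d'" using f12[OF a(2)] f12[OF a(4)] by simp
      then show "w = w' \<and> d = d'" using a(5) by simp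
    qed
    moreover have "(\<lambda>(w,d). (f1 d + w, f2 d + w)) ` (W \<times> D) \<subseteq> S \<times> S"
    proof (clarsimp)
      fix w d assume "w \<in> W" "d \<in> D"
      then show "f1 d + w \<in> S \<and> f2 d + w \<in> S" using f12[OF \<open>d \<in> D\<close>] unfolding S_def by blast
    qed
    ultimately have "card (W \<times> D) \<le> card (S \<times> S)"
      by (rule card_inj_on_le) (simp add: fS)
    then show ?thesis by (simp add: card_cartesian_product)
  qed
  have cS2: "real (card S) \<le> 8 * n / (\<kappa>^3 * \<theta>)"
  proof -
    have "(2 * n / \<kappa>)^3 = (8 * n / (\<kappa>^3 * \<theta>)) * (\<theta> * n * n)"
      using kpos thpos npos by (simp add: field_simps power3_eq_cube)
    then have h: "real (card S) * (\<theta> * n * n) \<le> (8 * n / (\<kappa>^3 * \<theta>)) * (\<theta> * n * n)"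
      using cS by linarith
    have "\<theta> * n * n > 0" using thpos npos by simp
    then show ?thesis by (rule mult_right_le_imp_le[OF h])
  qed
  have cWpos: "real (card W) \<ge> \<kappa> * n / 8" using cW by (simp add: n_def)
  have "real (card W) * real (card D) \<le> real (card S) * real (card S)"
    using ruzsa by (metis of_nat_le_iff of_nat_mult)
  also have "\<dots> \<le> (8 * n / (\<kappa>^3 * \<theta>)) * (8 * n / (\<kappa>^3 * \<theta>))"
    using cS2 by (intro mult_mono) auto
  finally have "real (card W) * real (card D) \<le> (8 * n / (\<kappa>^3 * \<theta>))^2" by (simp add: power2_eq_square)
  moreover have "(\<kappa> * n / 8) * real (card D) \<le> real (card W) * real (card D)"
    using cWpos by (intro mult_right_mono) auto
  ultimately have "(\<kappa> * n / 8) * real (card D) \<le> (8 * n / (\<kappa>^3 * \<theta>))^2" by linarith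
  moreover have "(8 * n / (\<kappa>^3 * \<theta>))^2 = (\<kappa> * n / 8) * (bsgK \<kappa> * n)"
    using kpos npos thpos by (simp add: bsgK_def \<theta>_def field_simps power2_eq_square)
  ultimately have "(\<kappa> * n / 8) * real (card D) \<le> (\<kappa> * n / 8) * (bsgK \<kappa> * n)" by simp
  then have "real (card D) \<le> bsgK \<kappa> * n" using kpos npos by (simp add: mult_le_cancel_left)
  then show ?thesis using UY cU unfolding D_def n_def by (intro exI[of _ U']) auto
qed

lemma count3:
  assumes fA: "finite A" and k: "\<And>u v. u\<in>A \<Longrightarrow> v\<in>A \<Longrightarrow> card {w\<in>A. R u v w} \<le> k"
  shows "card {(u,v,w). u\<in>A \<and> v\<in>A \<and> w\<in>A \<and> R u v w} \<le> k * card A * card A"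
proof -
  define Sg where "Sg = (SIGMA p:A\<times>A. {w\<in>A. R (fst p) (snd p) w})"
  have fSg: "finite Sg" unfolding Sg_def using fA by (intro finite_SigmaI) auto
  have "{(u,v,w). u\<in>A \<and> v\<in>A \<and> w\<in>A \<and> R u v w} \<subseteq> (\<lambda>((u,v),w). (u,v,w)) ` Sg"
  proof
    fix q assume "q \<in> {(u,v,w). u\<in>A \<and> v\<in>A \<and> w\<in>A \<and> R u v w}"
    then obtain u v w where q: "q = (u,v,w)" "u\<in>A" "v\<in>A" "w\<in>A" "R u v w" by auto
    then have "((u,v),w) \<in> Sg" by (simp add: Sg_def)
    then show "q \<in> (\<lambda>((u,v),w). (u,v,w)) ` Sg" using q(1) by (intro image_eqI[of _ _ "((u,v),w)"]) auto
  qed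
  then have "card {(u,v,w). u\<in>A \<and> v\<in>A \<and> w\<in>A \<and> R u v w} \<le> card ((\<lambda>((u,v),w). (u,v,w)) ` Sg)"
    by (intro card_mono finite_imageI fSg)
  also have "\<dots> \<le> card Sg" by (rule card_image_le[OF fSg])
  also have "\<dots> = (\<Sum>p\<in>A\<times>A. card {w\<in>A. R (fst p) (snd p) w})" using fA by (simp add: Sg_def)
  also have "\<dots> \<le> (\<Sum>p\<in>A\<times>A. k)" by (intro sum_mono) (auto intro: k)
  also have "\<dots> = k * card A * card A" by (simp add: card_cartesian_product)
  finally show ?thesis .
qed

context
  fixes x :: "nat \<Rightarrow> real" and c :: real
  assumes c_pos: "c > 0" and gaps: "\<And>n. n \<ge> 1 \<Longrightarrow> x (Suc n) - x n \<ge> c * ln (real n) / real n"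
begin

lemma x_mono: assumes "1 \<le> i" "i \<le> j" shows "x i \<le> x j"
  using assms(2)
proof (induction j rule: dec_induct)
  case base then show ?case by simp
next
  case (step j)
  have "j \<ge> 1" using step assms(1) by simp
  then have "c * ln (real j) / real j \<ge> 0" using c_pos by simp
  then show ?case using gaps[OF \<open>j \<ge> 1\<close>] step by linarith
qed

lemma x_sep: assumes "2 \<le> i" "i < j" "j \<le> a" shows "x j - x i \<ge> c / (2 * real a)"
proof -
  have "x (Suc i) - x i \<ge> c * ln (real i) / real i" using gaps assms by simp
  moreover have "c * ln (real i) / real i \<ge> c * ln (real i) / real a"
  proof -
    have "ln (real i) \<ge> 0" using assms by simp
    then show ?thesis using assms c_pos by (intro divide_left_mono) auto
  qed
  moreover have "c * ln (real i) / real a \<ge> c * ln 2 / real a"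
  proof -
    have "ln (real i) \<ge> ln 2" using assms by simp
    then show ?thesis using c_pos assms by (intro divide_right_mono mult_left_mono) auto
  qed
  moreover have "c * ln 2 / real a \<ge> c / (2 * real a)"
  proof -
    have "c * (1/2) \<le> c * ln 2" by (rule mult_left_mono) (use ln2_ge_two_thirds c_pos in auto)
    then have "c * ln 2 \<ge> c / 2" by simp
    then have "(c/2) / real a \<le> (c * ln 2) / real a" by (rule divide_right_mono) simp
    then show ?thesis by simp
  qed
  moreover have "x j \<ge> x (Suc i)" using x_mono assms by simp
  ultimately show ?thesis by linarith
qed

lemma few_close:
  assumes gpos: "\<gamma> > 0" and small: "4 * \<gamma> * real a < c"
  shows "card {n\<in>{1..a}. \<bar>x n - C\<bar> < \<gamma>} \<le> 2"
proof -
  define S' where "S' = {n\<in>{2..a}. \<bar>x n - C\<bar> < \<gamma>}"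
  have "card S' \<le> Suc 0"
  proof (subst card_le_Suc0_iff_eq)
    show "finite S'" by (simp add: S'_def)
    show "\<forall>i\<in>S'. \<forall>j\<in>S'. i = j"
    proof (intro ballI, rule ccontr)
      fix i j assume ij: "i \<in> S'" "j \<in> S'" "i \<noteq> j"
      have apos: "real a > 0" using ij by (auto simp: S'_def)
      have g2: "2 * \<gamma> < c / (2 * real a)" using small apos by (simp add: field_simps)
      show False
      proof (cases "i < j")
        case True
        then have "x j - x i \<ge> c / (2 * real a)" using ij by (intro x_sep) (auto simp: S'_def)
        moreover have "\<bar>x i - C\<bar> < \<gamma>" "\<bar>x j - C\<bar> < \<gamma>" using ij by (auto simp: S'_def)
        ultimately show False using g2 by linarith
      next
        case False
        then have "j < i" using ij by simp
        then have "x i - x j \<ge> c / (2 * real a)" using ij by (intro x_sep) (auto simp: S'_def)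
        moreover have "\<bar>x i - C\<bar> < \<gamma>" "\<bar>x j - C\<bar> < \<gamma>" using ij by (auto simp: S'_def)
        ultimately show False using g2 by linarith
      qed
    qed
  qed
  moreover have "{n\<in>{1..a}. \<bar>x n - C\<bar> < \<gamma>} \<subseteq> insert 1 S'" by (auto simp: S'_def)
  then have "card {n\<in>{1..a}. \<bar>x n - C\<bar> < \<gamma>} \<le> card (insert 1 S')"
    by (intro card_mono) (auto simp: S'_def)
  moreover have "card (insert 1 S') \<le> Suc (card S')" by (simp add: card_insert_le_m1 card_insert_if S'_def)
  ultimately show ?thesis by linarith
qed


lemma energy_I:
  assumes gpos: "\<gamma> > 0" and small: "4 * \<gamma> * real a < c"
  shows "real (add_energy x a \<gamma>) \<le> real (card {(n1,n2,n3,n4). n1\<in>{2..a} \<and> n2\<in>{2..a} \<and> n3\<in>{2..a} \<and> n4\<in>{2..a}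
            \<and> \<bar>x n1 + x n2 - x n3 - x n4\<bar> < \<gamma>}) + 8 * real a ^ 2"
proof -
  define A where "A = {1..a}"
  have fA: "finite A" by (simp add: A_def)
  have cA: "card A = a" by (simp add: A_def)
  define QI where "QI = {(n1,n2,n3,n4). n1\<in>{2..a} \<and> n2\<in>{2..a} \<and> n3\<in>{2..a} \<and> n4\<in>{2..a}
            \<and> \<bar>x n1 + x n2 - x n3 - x n4\<bar> < \<gamma>}"
  define Q where "Q = {(n1, n2, n3, n4). n1 \<in> {1..a} \<and> n2 \<in> {1..a} \<and> n3 \<in> {1..a} \<and> n4 \<in> {1..a}
       \<and> \<bar>x n1 + x n2 - x n3 - x n4\<bar> < \<gamma>}"
  have fin4: "finite {(n1, n2, n3, n4). n1 \<in> A \<and> n2 \<in> A \<and> n3 \<in> A \<and> n4 \<in> A \<and> P n1 n2 n3 n4}" for P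
    by (rule finite_subset[of _ "A\<times>A\<times>A\<times>A"]) (auto simp: fA)
  define R1 where "R1 u v w = (\<bar>x 1 + x u - x v - x w\<bar> < \<gamma>)" for u v w
  define R2 where "R2 u v w = (\<bar>x u + x 1 - x v - x w\<bar> < \<gamma>)" for u v w
  define R3 where "R3 u v w = (\<bar>x w + x u - x 1 - x v\<bar> < \<gamma>)" for u v w
  define R4 where "R4 u v w = (\<bar>x w + x u - x v - x 1\<bar> < \<gamma>)" for u v w
  define Z where "Z R = {(u,v,w). u\<in>A \<and> v\<in>A \<and> w\<in>A \<and> R u v w}" for R :: "nat \<Rightarrow> nat \<Rightarrow> nat \<Rightarrow> bool"
  have cZ: "card (Z R) \<le> 2 * a * a" if hR: "\<And>u v. \<exists>C. \<forall>w. R u v w \<longleftrightarrow> \<bar>x w - C\<bar> < \<gamma>" for R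
    unfolding Z_def
  proof -
    have "card {(u,v,w). u\<in>A \<and> v\<in>A \<and> w\<in>A \<and> R u v w} \<le> 2 * card A * card A"
    proof (rule count3[OF fA])
      fix u v
      obtain C where C: "\<forall>w. R u v w \<longleftrightarrow> \<bar>x w - C\<bar> < \<gamma>" using hR by blast
      have "{w\<in>A. R u v w} = {n\<in>{1..a}. \<bar>x n - C\<bar> < \<gamma>}" using C by (auto simp: A_def)
      then show "card {w\<in>A. R u v w} \<le> 2" using few_close[OF gpos small] by simp
    qed
    then show "card {(u,v,w). u\<in>A \<and> v\<in>A \<and> w\<in>A \<and> R u v w} \<le> 2 * a * a" by (simp add: cA)
  qed
  have c1: "card (Z R1) \<le> 2 * a * a"
    by (rule cZ) (rule_tac x="x 1 + x u - x v" in exI, auto simp: R1_def abs_minus_commute algebra_simps)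
  have c2: "card (Z R2) \<le> 2 * a * a"
    by (rule cZ) (rule_tac x="x u + x 1 - x v" in exI, auto simp: R2_def abs_minus_commute algebra_simps)
  have c3: "card (Z R3) \<le> 2 * a * a"
    by (rule cZ) (rule_tac x="x 1 + x v - x u" in exI, auto simp: R3_def algebra_simps)
  have c4: "card (Z R4) \<le> 2 * a * a"
    by (rule cZ) (rule_tac x="x v + x 1 - x u" in exI, auto simp: R4_def algebra_simps)
  have sub: "Q \<subseteq> QI \<union> (\<lambda>(u,v,w). (1,u,v,w)) ` Z R1 \<union> (\<lambda>(u,v,w). (u,1,v,w)) ` Z R2
                \<union> (\<lambda>(u,v,w). (w,u,1,v)) ` Z R3 \<union> (\<lambda>(u,v,w). (w,u,v,1)) ` Z R4"
  proof
    fix q assume "q \<in> Q"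
    then obtain n1 n2 n3 n4 where q: "q = (n1,n2,n3,n4)" "n1 \<in> A" "n2 \<in> A" "n3 \<in> A" "n4 \<in> A"
      "\<bar>x n1 + x n2 - x n3 - x n4\<bar> < \<gamma>" by (auto simp: Q_def A_def)
    consider "n1 = 1" | "n2 = 1" | "n3 = 1" | "n4 = 1" | "n1 \<noteq> 1 \<and> n2 \<noteq> 1 \<and> n3 \<noteq> 1 \<and> n4 \<noteq> 1" by blast
    then show "q \<in> QI \<union> (\<lambda>(u,v,w). (1,u,v,w)) ` Z R1 \<union> (\<lambda>(u,v,w). (u,1,v,w)) ` Z R2
                \<union> (\<lambda>(u,v,w). (w,u,1,v)) ` Z R3 \<union> (\<lambda>(u,v,w). (w,u,v,1)) ` Z R4"
    proof cases
      case 1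
      then have "(n2,n3,n4) \<in> Z R1" using q by (simp add: Z_def R1_def)
      then have "q \<in> (\<lambda>(u,v,w). (1,u,v,w)) ` Z R1" using q(1) 1 by (intro image_eqI[of _ _ "(n2,n3,n4)"]) auto
      then show ?thesis by blast
    next
      case 2
      then have "(n1,n3,n4) \<in> Z R2" using q by (simp add: Z_def R2_def)
      then have "q \<in> (\<lambda>(u,v,w). (u,1,v,w)) ` Z R2" using q(1) 2 by (intro image_eqI[of _ _ "(n1,n3,n4)"]) auto
      then show ?thesis by blast
    next
      case 3
      then have "(n2,n4,n1) \<in> Z R3" using q by (simp add: Z_def R3_def)
      then have "q \<in> (\<lambda>(u,v,w). (w,u,1,v)) ` Z R3" using q(1) 3 by (intro image_eqI[of _ _ "(n2,n4,n1)"]) auto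
      then show ?thesis by blast
    next
      case 4
      then have "(n2,n3,n1) \<in> Z R4" using q by (simp add: Z_def R4_def)
      then have "q \<in> (\<lambda>(u,v,w). (w,u,v,1)) ` Z R4" using q(1) 4 by (intro image_eqI[of _ _ "(n2,n3,n1)"]) auto
      then show ?thesis by blast
    next
      case 5
      then have "q \<in> QI" using q by (auto simp: QI_def A_def)
      then show ?thesis by blast
    qed
  qed
  have fZ: "finite (Z R)" for R by (rule finite_subset[of _ "A\<times>A\<times>A"]) (auto simp: Z_def fA)
  have fQI: "finite QI" by (rule finite_subset[of _ "{2..a}\<times>{2..a}\<times>{2..a}\<times>{2..a}"]) (auto simp: QI_def)
  have "card Q \<le> card (QI \<union> (\<lambda>(u,v,w). (1,u,v,w)) ` Z R1 \<union> (\<lambda>(u,v,w). (u,1,v,w)) ` Z R2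
                \<union> (\<lambda>(u,v,w). (w,u,1,v)) ` Z R3 \<union> (\<lambda>(u,v,w). (w,u,v,1)) ` Z R4)"
    by (rule card_mono[OF _ sub]) (simp add: fQI fZ)
  also have "\<dots> \<le> card QI + card (Z R1) + card (Z R2) + card (Z R3) + card (Z R4)"
  proof -
    have u: "card (X1 \<union> X2 \<union> X3 \<union> X4 \<union> X5) \<le> card X1 + card X2 + card X3 + card X4 + card X5" for X1 X2 X3 X4 X5 :: "(nat \<times> nat \<times> nat \<times> nat) set"
      using card_Un_le[of "X1 \<union> X2 \<union> X3 \<union> X4" X5] card_Un_le[of "X1 \<union> X2 \<union> X3" X4]
        card_Un_le[of "X1 \<union> X2" X3] card_Un_le[of X1 X2] by linarith
    have i: "card (f ` Z R) \<le> card (Z R)" for f :: "nat \<times> nat \<times> nat \<Rightarrow> nat \<times> nat \<times> nat \<times> nat" and R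
      by (rule card_image_le[OF fZ])
    show ?thesis using u[of QI "(\<lambda>(u,v,w). (1,u,v,w)) ` Z R1" "(\<lambda>(u,v,w). (u,1,v,w)) ` Z R2"
       "(\<lambda>(u,v,w). (w,u,1,v)) ` Z R3" "(\<lambda>(u,v,w). (w,u,v,1)) ` Z R4"] i[of "\<lambda>(u,v,w). (1,u,v,w)" R1] i[of "\<lambda>(u,v,w). (u,1,v,w)" R2]
      i[of "\<lambda>(u,v,w). (w,u,1,v)" R3] i[of "\<lambda>(u,v,w). (w,u,v,1)" R4] by linarith
  qed
  finally have "card Q \<le> card QI + 8 * (a * a)" using c1 c2 c3 c4 by linarith
  then have "real (card Q) \<le> real (card QI) + 8 * (real a * real a)"
    by (metis of_nat_add of_nat_le_iff of_nat_mult of_nat_numeral)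
  then show ?thesis by (simp add: add_energy_def Q_def QI_def power2_eq_square)
qed


lemma bsgK_nonneg: "\<kappa> > 0 \<Longrightarrow> bsgK \<kappa> \<ge> 0"
  by (simp add: bsgK_def)

lemma scale_structure:
  assumes rpos: "r > 0" and a2: "a \<ge> 2" and gpos: "\<gamma> > 0" and small: "4 * \<gamma> * real a < c"
    and abig: "16 / r \<le> real a" and en: "real (add_energy x a \<gamma>) \<ge> r * real a ^ 3"
  shows "\<exists>B \<subseteq> {2..a}. real (card B) \<ge> (r/10) * (real a - 1) / 12 \<and>
     (\<exists>V::int set. finite V \<and> real (card V) \<le> bsgK (r/10) * real a \<and>
        (\<forall>i\<in>B. \<forall>j\<in>B. \<exists>v\<in>V. \<bar>x i - x j - \<gamma> * of_int v\<bar> < \<gamma>))"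
proof -
  define I where "I = {2..a}"
  define y where "y n = \<lfloor>x n / \<gamma>\<rfloor>" for n
  have yle: "\<gamma> * of_int (y n) \<le> x n" for n
  proof -
    have "of_int (y n) \<le> x n / \<gamma>" by (simp add: y_def)
    then show ?thesis using gpos by (simp add: field_simps)
  qed
  have ygt: "\<gamma> * of_int (y n) > x n - \<gamma>" for n
  proof -
    have "of_int (y n) > x n / \<gamma> - 1" unfolding y_def by linarith
    then show ?thesis using gpos by (simp add: field_simps)
  qed
  have apos: "real a > 0" using a2 by simp
  have ylt: "y i < y j" if "i \<in> I" "j \<in> I" "i < j" for i j
  proof -
    have "x j - x i \<ge> c / (2 * real a)" using that by (intro x_sep) (auto simp: I_def)
    moreover have "c / (2 * real a) > \<gamma>"
    proof -
      have ga: "\<gamma> * real a > 0" using gpos apos by simp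
      have e1: "\<gamma> * (2 * real a) = 2 * (\<gamma> * real a)" "4 * \<gamma> * real a = 4 * (\<gamma> * real a)" by simp_all
      have "\<gamma> * (2 * real a) < c" using small ga unfolding e1 by linarith
      then show ?thesis using apos by (simp add: pos_less_divide_eq)
    qed
    ultimately have "x j - x i > \<gamma>" by linarith
    then have "\<gamma> * of_int (y i) + \<gamma> < \<gamma> * of_int (y j) + \<gamma>"
      using yle[of i] ygt[of j] by linarith
    then have "\<gamma> * of_int (y i) < \<gamma> * of_int (y j)" by simp
    then have "of_int (y i) < (of_int (y j) :: real)" using gpos by simp
    then show ?thesis by simp
  qed
  have yinj: "inj_on y I"
  proof (rule inj_onI, rule ccontr)
    fix i j assume ij: "i \<in> I" "j \<in> I" "y i = y j" "i \<noteq> j"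
    show False
    proof (cases "i < j")
      case True then show False using ylt[OF ij(1,2)] ij(3) by simp
    next
      case False then have "j < i" using ij(4) by simp
      then show False using ylt[OF ij(2,1)] ij(3) by simp
    qed
  qed
  define Y where "Y = y ` I"
  have fY: "finite Y" by (simp add: Y_def I_def)
  have cY: "card Y = a - 1" using yinj by (simp add: Y_def card_image I_def)
  have neY: "Y \<noteq> {}" using a2 by (auto simp: Y_def I_def)
  define QI where "QI = {(n1,n2,n3,n4). n1\<in>{2..a} \<and> n2\<in>{2..a} \<and> n3\<in>{2..a} \<and> n4\<in>{2..a}
            \<and> \<bar>x n1 + x n2 - x n3 - x n4\<bar> < \<gamma>}"
  have fQI: "finite QI" by (rule finite_subset[of _ "{2..a}\<times>{2..a}\<times>{2..a}\<times>{2..a}"]) (auto simp: QI_def)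
  have cQI: "real (card QI) \<ge> r * real a ^ 3 / 2"
  proof -
    have "real (card QI) \<ge> r * real a ^ 3 - 8 * real a ^ 2"
      using energy_I[OF gpos small] en unfolding QI_def by linarith
    moreover have "8 * real a ^ 2 \<le> r * real a ^ 3 / 2"
    proof -
      have "16 \<le> r * real a" using abig rpos by (simp add: field_simps)
      then have "16 * real a ^ 2 \<le> (r * real a) * real a ^ 2" by (intro mult_right_mono) auto
      then show ?thesis by (simp add: power2_eq_square power3_eq_cube algebra_simps)
    qed
    ultimately show ?thesis by linarith
  qed
  define T where "T s = {(a,b,c,d). a\<in>Y \<and> b\<in>Y \<and> c\<in>Y \<and> d\<in>Y \<and> a+b = c+d+s}" for s :: int
  have fT: "finite (T s)" for s by (rule finite_subset[of _ "Y\<times>Y\<times>Y\<times>Y"]) (auto simp: T_def fY)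
  define h where "h = (\<lambda>(n1,n2,n3,n4). (y n1, y n2, y n3, y n4))"
  have hinj: "inj_on h QI"
  proof (rule inj_onI)
    fix p q assume "p \<in> QI" "q \<in> QI" "h p = h q"
    then show "p = q" using yinj unfolding QI_def h_def I_def inj_on_def by auto
  qed
  have himg: "h ` QI \<subseteq> (\<Union>s\<in>{-2..2}. T s)"
  proof
    fix z assume "z \<in> h ` QI"
    then obtain n1 n2 n3 n4 where q: "n1\<in>I" "n2\<in>I" "n3\<in>I" "n4\<in>I"
        "\<bar>x n1 + x n2 - x n3 - x n4\<bar> < \<gamma>" and z: "z = (y n1, y n2, y n3, y n4)"
      by (auto simp: QI_def h_def I_def)
    define s where "s = y n1 + y n2 - y n3 - y n4"
    have "\<gamma> * of_int s < 3 * \<gamma>" "\<gamma> * of_int s > - 3 * \<gamma>"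
      using yle[of n1] yle[of n2] yle[of n3] yle[of n4] ygt[of n1] ygt[of n2] ygt[of n3] ygt[of n4] q(5)
      unfolding s_def by (simp_all add: algebra_simps)
    then have "\<gamma> * of_int s < \<gamma> * 3" "\<gamma> * (-3) < \<gamma> * of_int s" by (simp_all add: mult.commute)
    then have "of_int s < (3::real)" "of_int s > (-3::real)" by (simp_all only: mult_less_cancel_left_pos[OF gpos])
    then have "s \<in> {-2..2}" by simp
    moreover have "z \<in> T s" using q z by (auto simp: T_def Y_def s_def)
    ultimately show "z \<in> (\<Union>s\<in>{-2..2}. T s)" by blast
  qed
  have "card QI = card (h ` QI)" using hinj by (simp add: card_image)
  also have "\<dots> \<le> card (\<Union>s\<in>{-2..2}. T s)" by (rule card_mono[OF _ himg]) (simp add: fT)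
  also have "\<dots> \<le> (\<Sum>s\<in>{-2..2}. card (T s))" by (rule card_UN_le) simp
  finally have "real (card QI) \<le> (\<Sum>s\<in>{-2..2::int}. real (card (T s)))" by (simp flip: of_nat_sum)
  then have "(\<Sum>s\<in>{-2..2::int}. real (card (T s))) \<ge> real (card {-2..2::int}) * (r * real a ^ 3 / 10)"
    using cQI by simp
  then obtain s where "s \<in> {-2..2::int}" and Ts: "real (card (T s)) \<ge> r * real a ^ 3 / 10"
    using exists_ge_avg[where B="{-2..2::int}" and f="\<lambda>s. real (card (T s))" and t= "r * real a ^ 3 / 10"] by auto
  have "real (card Y) ^ 3 \<le> real a ^ 3" using cY by (intro power_mono) auto
  then have "(r/10) * real (card Y) ^ 3 \<le> (r/10) * real a ^ 3" using rpos by (intro mult_left_mono) auto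
  then have Qhyp: "real (card {(a,b,c,d). a\<in>Y \<and> b\<in>Y \<and> c\<in>Y \<and> d\<in>Y \<and> a+b = c+d+s}) \<ge> (r/10) * card Y ^ 3"
    using Ts unfolding T_def by simp
  obtain U where UY: "U \<subseteq> Y" and cU: "real (card U) \<ge> (r/10) * card Y / 12"
    and cD: "real (card {u1 - u2 | u1 u2. u1\<in>U \<and> u2\<in>U}) \<le> bsgK (r/10) * card Y"
    using bsg_int[OF fY neY _ Qhyp] rpos by auto
  define B where "B = {i\<in>I. y i \<in> U}"
  have "y ` B = U" using UY by (auto simp: B_def Y_def)
  moreover have "inj_on y B" using yinj by (rule inj_on_subset) (auto simp: B_def)
  ultimately have cB: "card B = card U" by (metis card_image)
  define V where "V = {u1 - u2 | u1 u2. u1\<in>U \<and> u2\<in>U}"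
  have fU: "finite U" using UY fY by (rule finite_subset)
  have fV: "finite V"
  proof -
    have "V = (\<lambda>p. fst p - snd p) ` (U \<times> U)" unfolding V_def image_def by auto
    then show ?thesis using fU by simp
  qed
  have "real (card V) \<le> bsgK (r/10) * real a"
  proof -
    have "bsgK (r/10) * real (card Y) \<le> bsgK (r/10) * real a"
      using cY bsgK_nonneg[of "r/10"] rpos by (intro mult_left_mono) auto
    then show ?thesis using cD by (simp add: V_def)
  qed
  moreover have "\<forall>i\<in>B. \<forall>j\<in>B. \<exists>v\<in>V. \<bar>x i - x j - \<gamma> * of_int v\<bar> < \<gamma>"
  proof (intro ballI)
    fix i j assume "i \<in> B" "j \<in> B"
    then have "y i - y j \<in> V" by (auto simp: V_def B_def)
    moreover have "\<bar>x i - x j - \<gamma> * of_int (y i - y j)\<bar> < \<gamma>"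
      using yle[of i] yle[of j] ygt[of i] ygt[of j] by (simp add: algebra_simps abs_less_iff)
    ultimately show "\<exists>v\<in>V. \<bar>x i - x j - \<gamma> * of_int v\<bar> < \<gamma>" by blast
  qed
  moreover have "B \<subseteq> {2..a}" by (auto simp: B_def I_def)
  moreover have "real (card B) \<ge> (r/10) * (real a - 1) / 12"
    using cU cB cY a2 by (simp add: of_nat_diff)
  ultimately show ?thesis using fV by blast
qed

end

lemma measure_ball_real: "\<rho> \<ge> 0 \<Longrightarrow> measure lborel (ball (z::real) \<rho>) = 2 * \<rho>"
  by (simp add: ball_eq_greaterThanLessThan measure_def)

definition cov :: "real \<Rightarrow> real \<Rightarrow> real \<Rightarrow> real set" where
  "cov m \<eta> d = (if \<bar>d\<bar> < 1/(2*m) then {} else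
     (\<Union>k\<in>{-(\<lceil>m*\<bar>d\<bar>\<rceil>+1)..\<lceil>m*\<bar>d\<bar>\<rceil>+1} - {0}. ball (of_int k / d) (\<eta>/\<bar>d\<bar>)))"

lemma cov_sets: "cov m \<eta> d \<in> sets lborel"
  unfolding cov_def by (auto intro!: borel_open open_UN)

lemma cov_bounded: "bounded (cov m \<eta> d)"
  unfolding cov_def by auto

lemma cov_fin: "emeasure lborel (cov m \<eta> d) < \<infinity>"
  by (rule emeasure_bounded_finite[OF cov_bounded])

lemma cov_measure:
  assumes mpos: "m > 0" and epos: "\<eta> > 0"
  shows "measure lborel (cov m \<eta> d) \<le> 20 * m * \<eta>"
proof (cases "\<bar>d\<bar> < 1/(2*m)")
  case True then show ?thesis using mpos epos by (simp add: cov_def)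
next
  case False
  define K where "K = \<lceil>m*\<bar>d\<bar>\<rceil>+1"
  define KS where "KS = {-K..K} - {0}"
  have dpos: "\<bar>d\<bar> > 0" using False mpos by (smt (verit) divide_pos_pos)
  have "m * \<bar>d\<bar> \<ge> 0" using mpos by simp
  then have K0: "K \<ge> 1" unfolding K_def by linarith
  have cKS: "card KS = 2 * nat K"
  proof -
    have "card {-K..K} = nat (2*K+1)" by simp
    then show ?thesis using K0 by (simp add: KS_def card_Diff_singleton)
  qed
  have "measure lborel (cov m \<eta> d) = measure lborel (\<Union>k\<in>KS. ball (of_int k / d) (\<eta>/\<bar>d\<bar>))"
    using False by (simp add: cov_def KS_def K_def)
  also have "\<dots> \<le> (\<Sum>k\<in>KS. measure lborel (ball (of_int k / d) (\<eta>/\<bar>d\<bar>)))"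
    by (rule measure_UNION_le) (auto simp: KS_def)
  also have "\<dots> = real (card KS) * (2 * (\<eta>/\<bar>d\<bar>))"
    using epos dpos by (simp add: measure_ball_real)
  also have "\<dots> = real (2 * nat K) * (2 * (\<eta>/\<bar>d\<bar>))" by (simp add: cKS)
  also have "\<dots> \<le> (2 * (m*\<bar>d\<bar> + 2)) * (2 * (\<eta>/\<bar>d\<bar>))"
  proof (rule mult_right_mono)
    have "real_of_int K \<le> m*\<bar>d\<bar> + 2" unfolding K_def by linarith
    then show "real (2 * nat K) \<le> 2 * (m*\<bar>d\<bar> + 2)" using K0 by simp
    show "0 \<le> 2 * (\<eta>/\<bar>d\<bar>)" using epos by simp
  qed
  also have "\<dots> = 4 * m * \<eta> + 8 * \<eta> * (1/\<bar>d\<bar>)" using dpos by (simp add: field_simps)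
  also have "\<dots> \<le> 4 * m * \<eta> + 8 * \<eta> * (2*m)"
  proof -
    have "1/\<bar>d\<bar> \<le> 2*m" using False dpos mpos by (simp add: field_simps)
    then have "(8 * \<eta>) * (1/\<bar>d\<bar>) \<le> (8 * \<eta>) * (2*m)" using epos by (intro mult_left_mono) auto
    then show ?thesis by linarith
  qed
  also have "\<dots> = 20 * m * \<eta>" by simp
  finally show ?thesis .
qed

lemma cov_cover:
  assumes mpos: "m > 0" and epos: "\<eta> > 0" and e4: "\<eta> \<le> 1/4" and dbig: "\<bar>d\<bar> \<ge> m * \<eta>"
    and al: "1/m \<le> \<bar>\<alpha>\<bar>" and au: "\<bar>\<alpha>\<bar> \<le> m" and k: "\<bar>\<alpha> * d - of_int k\<bar> < \<eta>"
  shows "\<alpha> \<in> cov m \<eta> d"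
proof -
  have ad: "\<bar>\<alpha> * d\<bar> \<ge> \<bar>d\<bar> / m"
  proof -
    have "\<bar>d\<bar> * (1/m) \<le> \<bar>d\<bar> * \<bar>\<alpha>\<bar>" using al by (intro mult_left_mono) auto
    then show ?thesis by (simp add: abs_mult mult.commute)
  qed
  have "\<bar>d\<bar> / m \<ge> \<eta>" using dbig mpos by (simp add: field_simps)
  then have k0: "k \<noteq> 0" using ad k by auto
  have adu: "\<bar>\<alpha> * d\<bar> \<le> m * \<bar>d\<bar>" using au by (simp add: abs_mult mult_right_mono)
  have nsmall: "\<not> \<bar>d\<bar> < 1/(2*m)"
  proof
    assume "\<bar>d\<bar> < 1/(2*m)"
    then have "m * \<bar>d\<bar> < 1/2" using mpos by (simp add: field_simps)
    then have "\<bar>of_int k\<bar> < (1::real)" using adu k e4 by linarith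
    then show False using k0 by linarith
  qed
  have dpos: "\<bar>d\<bar> > 0" using nsmall mpos by (smt (verit) divide_pos_pos)
  define K where "K = \<lceil>m*\<bar>d\<bar>\<rceil>+1"
  have kK: "k \<in> {-K..K} - {0}"
  proof -
    have "\<bar>of_int k\<bar> < m * \<bar>d\<bar> + 1" using adu k e4 by linarith
    then have "\<bar>k\<bar> \<le> K" unfolding K_def by linarith
    then show ?thesis using k0 by auto
  qed
  have "dist \<alpha> (of_int k / d) < \<eta> / \<bar>d\<bar>"
  proof -
    have "\<alpha> - of_int k / d = (\<alpha> * d - of_int k) / d" using dpos by (simp add: field_simps)
    then have "dist \<alpha> (of_int k / d) = \<bar>\<alpha> * d - of_int k\<bar> / \<bar>d\<bar>" by (simp add: dist_real_def)
    then show ?thesis using k dpos by (simp add: divide_strict_right_mono)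
  qed
  then show ?thesis using nsmall kK unfolding cov_def K_def by (auto simp: dist_commute)
qed

lemma dist_int_lt:
  assumes "dist_int z < \<eta>" shows "\<exists>k::int. \<bar>z - of_int k\<bar> < \<eta>"
proof -
  have "bdd_below ((\<lambda>k::int. \<bar>z - of_int k\<bar>) ` UNIV)" by (rule bdd_belowI[of _ 0]) auto
  then show ?thesis using assms unfolding dist_int_def by (simp add: cINF_less_iff)
qed

lemma dist_int_pos:
  assumes "\<forall>k::int. z \<noteq> of_int k" shows "dist_int z > 0"
proof -
  define \<delta> where "\<delta> = min (z - of_int \<lfloor>z\<rfloor>) (of_int \<lfloor>z\<rfloor> + 1 - z)"
  have zf: "z > of_int \<lfloor>z\<rfloor>" using assms of_int_floor_le[of z] by (metis order_le_less)
  have "z < of_int \<lfloor>z\<rfloor> + 1" by linarith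
  then have dpos: "\<delta> > 0" using zf by (simp add: \<delta>_def)
  have "\<delta> \<le> \<bar>z - of_int k\<bar>" for k :: int
  proof (cases "k \<le> \<lfloor>z\<rfloor>")
    case True
    then have "(of_int k::real) \<le> of_int \<lfloor>z\<rfloor>" by simp
    then show ?thesis using zf by (simp add: \<delta>_def)
  next
    case False
    then have "(of_int k::real) \<ge> of_int \<lfloor>z\<rfloor> + 1" by simp
    then show ?thesis using zf by (simp add: \<delta>_def)
  qed
  then have "\<delta> \<le> dist_int z" unfolding dist_int_def by (intro cINF_greatest) auto
  then show ?thesis using dpos by linarith
qed

fun seqa :: "real \<Rightarrow> nat \<Rightarrow> nat" where
  "seqa L 0 = nat \<lceil>L\<rceil> + 3"
| "seqa L (Suc N) = nat \<lceil>exp (2^(Suc N) * L * (1 + real (seqa L N)))\<rceil>"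

context
  fixes L :: real assumes L1: "L \<ge> 1"
begin

lemma seqa_ge_exp: "real (seqa L (Suc N)) \<ge> exp (2^(Suc N) * L * (1 + real (seqa L N)))"
  by simp

lemma seqa_ln: "ln (real (seqa L (Suc N))) \<ge> 2^(Suc N) * L * (1 + real (seqa L N))"
proof -
  have "exp (2^(Suc N) * L * (1 + real (seqa L N))) \<le> real (seqa L (Suc N))" by (rule seqa_ge_exp)
  then have "ln (exp (2^(Suc N) * L * (1 + real (seqa L N)))) \<le> ln (real (seqa L (Suc N)))"
    by (subst ln_le_cancel_iff) auto
  then show ?thesis by simp
qed

lemma seqa_ge_lin: "real (seqa L (Suc N)) \<ge> L * (1 + real (seqa L N))"
proof -
  have "L * (1 + real (seqa L N)) \<le> 2^(Suc N) * L * (1 + real (seqa L N))"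
  proof (rule mult_right_mono)
    have "(1::real) \<le> 2^(Suc N)" by (rule one_le_power) simp
    then show "L \<le> 2^(Suc N) * L" using L1 by (simp add: mult_le_cancel_right1)
  qed simp
  also have "\<dots> \<le> exp (2^(Suc N) * L * (1 + real (seqa L N)))"
    using exp_ge_add_one_self[of "2^(Suc N) * L * (1 + real (seqa L N))"] by linarith
  also have "\<dots> \<le> real (seqa L (Suc N))" by (rule seqa_ge_exp)
  finally show ?thesis .
qed

lemma seqa_ge_L: "real (seqa L N) \<ge> L"
proof (cases N)
  case 0 then show ?thesis by simp linarith
next
  case (Suc M)
  have "L * 1 \<le> L * (1 + real (seqa L M))" using L1 by (intro mult_left_mono) auto
  then show ?thesis using seqa_ge_lin[of M] Suc by simp
qed

lemma seqa_step: "seqa L N < seqa L (Suc N)"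
proof -
  have "1 * (1 + real (seqa L N)) \<le> L * (1 + real (seqa L N))" using L1
    by (intro mult_right_mono) auto
  then have "L * (1 + real (seqa L N)) \<ge> 1 + real (seqa L N)" by simp
  then have "real (seqa L (Suc N)) \<ge> 1 + real (seqa L N)" using seqa_ge_lin[of N] by linarith
  then show ?thesis by simp
qed

lemma seqa_mono: "strict_mono (seqa L)"
  by (rule strict_monoI_Suc) (rule seqa_step)

lemma seqa_ge3: "seqa L N \<ge> 3"
proof -
  have "seqa L 0 \<le> seqa L N" using strict_mono_less_eq[OF seqa_mono, of 0 N] by (simp del: seqa.simps)
  then show ?thesis by simp
qed

lemma seqa_ln_big: "ln (real (seqa L (Suc N))) \<ge> 2^(Suc N)"
proof -
  have "1 * 1 \<le> L * (1 + real (seqa L N))" using L1 by (intro mult_mono) auto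
  then have "(2::real)^(Suc N) * 1 \<le> 2^(Suc N) * (L * (1 + real (seqa L N)))"
    by (intro mult_left_mono) auto
  moreover have "2^(Suc N) * L * (1 + real (seqa L N)) = (2::real)^(Suc N) * (L * (1 + real (seqa L N)))"
    by (simp add: mult.assoc)
  ultimately show ?thesis using seqa_ln[of N] by linarith
qed

end

lemma card_enum_le:
  fixes S :: "nat set"
  assumes inf: "infinite S"
  shows "card {k. k \<ge> 1 \<and> enumerate S (k - 1) \<le> a} = card (S \<inter> {..a})"
proof -
  define F where "F = {k. k \<ge> 1 \<and> enumerate S (k - 1) \<le> a}"
  have "bij_betw (\<lambda>k. enumerate S (k - 1)) F (S \<inter> {..a})"
  proof (rule bij_betw_imageI)
    show "inj_on (\<lambda>k. enumerate S (k - 1)) F"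
    proof (rule inj_onI)
      fix k l assume "k \<in> F" "l \<in> F" "enumerate S (k - 1) = enumerate S (l - 1)"
      then have "k - 1 = l - 1" using inj_enumerate[OF inf] by (auto dest: injD)
      then show "k = l" using \<open>k \<in> F\<close> \<open>l \<in> F\<close> by (auto simp: F_def)
    qed
    show "(\<lambda>k. enumerate S (k - 1)) ` F = S \<inter> {..a}"
    proof
      show "(\<lambda>k. enumerate S (k - 1)) ` F \<subseteq> S \<inter> {..a}"
        using enumerate_in_set[OF inf] by (auto simp: F_def)
      show "S \<inter> {..a} \<subseteq> (\<lambda>k. enumerate S (k - 1)) ` F"
      proof
        fix i assume i: "i \<in> S \<inter> {..a}"
        then obtain n where n: "enumerate S n = i"
          using bij_enumerate[OF inf] by (metis IntD1 bij_betw_iff_bijections)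
        then have "Suc n \<in> F" using i by (simp add: F_def)
        then show "i \<in> (\<lambda>k. enumerate S (k - 1)) ` F" using n by (intro image_eqI[of _ _ "Suc n"]) auto
      qed
    qed
  qed
  then show ?thesis unfolding F_def by (rule bij_betw_same_card)
qed

lemma powr_ge_ln: fixes t e :: real assumes "ln t \<ge> 1" "e \<ge> 0" shows "ln t powr (1+e) \<ge> ln t"
proof -
  have "ln t powr 1 \<le> ln t powr (1+e)" using assms by (intro powr_mono) auto
  moreover have "ln t powr 1 = ln t" using assms by simp
  ultimately show ?thesis by simp
qed

lemma inv_powr_le: fixes t e :: real assumes "t \<ge> 1" "ln t \<ge> 1" "e \<ge> 0"
  shows "1 / (t * ln t powr (1+e)) \<le> 1 / (t * ln t)" and "1 / (t * ln t powr (1+e)) > 0"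
proof -
  have "t * ln t \<le> t * ln t powr (1+e)" using powr_ge_ln[OF assms(2,3)] assms by (intro mult_left_mono) auto
  moreover have "t * ln t > 0"
  proof -
    have "t \<noteq> 1" using assms(2) by auto
    then have "t > 1" using assms(1) by simp
    then show ?thesis using assms(2) by (intro mult_pos_pos) auto
  qed
  ultimately show "1 / (t * ln t powr (1+e)) \<le> 1 / (t * ln t)" by (intro divide_left_mono) auto
  have "ln t powr (1+e) > 0" using powr_ge_ln[OF assms(2,3)] assms(2) by linarith
  then show "1 / (t * ln t powr (1+e)) > 0" using assms(1) by simp
qed

context
  fixes x :: "nat \<Rightarrow> real" and c \<epsilon>0 r :: real
  assumes c_pos: "c > 0"
    and gaps: "\<And>n. n \<ge> 1 \<Longrightarrow> x (Suc n) - x n \<ge> c * ln (real n) / real n"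
    and eps0_pos: "\<epsilon>0 > 0"
    and r_pos: "r > 0"
    and energy: "\<And>N. N \<ge> 2 \<Longrightarrow>
       real (add_energy x N (1 / (real N * ln (real N) powr (1 + \<epsilon>0)))) \<ge> r * real N ^ 3"
begin

lemma construct:
  "\<exists>a B V K c1. strict_mono a \<and> (\<forall>N. a N \<ge> 3) \<and> K \<ge> 0 \<and> c1 > 0 \<and>
    (\<forall>N\<ge>1. ln (real (a N)) \<ge> 2^N * (K + 2 * real (a (N-1))) \<and> ln (real (a N)) \<ge> 2^N \<and> ln (real (a N)) \<ge> 1 + 4/c) \<and>
    (\<forall>N\<ge>1. B N \<subseteq> {a (N-1)<..a N} \<and> B N \<subseteq> {2..} \<and> real (card (B N)) \<ge> c1 * real (a N)) \<and>
    (\<forall>N\<ge>1. finite (V N) \<and> real (card (V N)) \<le> K * real (a N) \<and>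
       (\<forall>i\<in>B N. \<forall>j\<in>B N. \<exists>v\<in>V N. \<bar>x i - x j - (1 / (real (a N) * ln (real (a N)) powr (1+\<epsilon>0))) * of_int v\<bar>
           < 1 / (real (a N) * ln (real (a N)) powr (1+\<epsilon>0))))"
proof -
  define K where "K = bsgK (r/10)"
  have K0: "K \<ge> 0" unfolding K_def using r_pos by (simp add: bsgK_def)
  define c0 where "c0 = min 1 (r/120)"
  have c0pos: "c0 > 0" and c01: "c0 \<le> 1" using r_pos by (auto simp: c0_def)
  define A0 where "A0 = max (exp (1 + 4/c)) (16/r)"
  define L where "L = max 1 (max A0 (max K (max 2 (4/(3*c0)))))"
  have L1: "L \<ge> 1" by (simp add: L_def)
  have LA0: "L \<ge> A0" "L \<ge> K" "L \<ge> 2" "L \<ge> 4/(3*c0)" by (auto simp: L_def)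
  define a where "a = seqa L"
  have a3: "a N \<ge> 3" for N unfolding a_def by (rule seqa_ge3[OF L1])
  have aL: "real (a N) \<ge> L" for N unfolding a_def by (rule seqa_ge_L[OF L1])
  have lnA: "ln (real (a N)) \<ge> 1 + 4/c" for N
  proof -
    have "exp (1 + 4/c) \<le> real (a N)" using aL[of N] LA0(1) by (simp add: A0_def)
    then show ?thesis using a3[of N] by (subst ln_ge_iff) auto
  qed
  have key: "\<exists>BV. fst BV \<subseteq> {a (N-1)<..a N} \<and> fst BV \<subseteq> {2..} \<and> real (card (fst BV)) \<ge> (c0/4) * real (a N) \<and>
       finite (snd BV) \<and> real (card (snd BV)) \<le> K * real (a N) \<and>
       (\<forall>i\<in>fst BV. \<forall>j\<in>fst BV. \<exists>v\<in>snd BV. \<bar>x i - x j - (1 / (real (a N) * ln (real (a N)) powr (1+\<epsilon>0))) * of_int v\<bar>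
           < 1 / (real (a N) * ln (real (a N)) powr (1+\<epsilon>0)))" if N1: "N \<ge> 1" for N
  proof -
    obtain M where NM: "N = Suc M" using N1 by (cases N) auto
    define an where "an = a N"
    define ap where "ap = a M"
    define \<gamma> where "\<gamma> = 1 / (real an * ln (real an) powr (1+\<epsilon>0))"
    have an3: "an \<ge> 3" by (simp add: an_def a3)
    have lnan: "ln (real an) \<ge> 1 + 4/c" by (simp add: an_def lnA)
    have c4: "4/c > 0" using c_pos by simp
    have lnan1: "ln (real an) \<ge> 1" using lnan c4 by linarith
    have gpos: "\<gamma> > 0" and gle: "\<gamma> \<le> 1 / (real an * ln (real an))"
      using inv_powr_le[of "real an" \<epsilon>0] an3 lnan1 eps0_pos by (auto simp: \<gamma>_def)
    have small: "4 * \<gamma> * real an < c"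
    proof -
      have "4 * \<gamma> * real an \<le> 4 * (1 / (real an * ln (real an))) * real an"
        using gle an3 by (intro mult_right_mono mult_left_mono) auto
      also have "\<dots> = 4 / ln (real an)" using an3 by simp
      also have "\<dots> < c"
      proof -
        have "ln (real an) > 4/c" using lnan by linarith
        then have "4 < c * ln (real an)" using c_pos by (simp add: field_simps)
        then show ?thesis using lnan1 by (simp add: field_simps)
      qed
      finally show ?thesis .
    qed
    have abig: "16 / r \<le> real an" using aL[of N] LA0(1) by (simp add: an_def A0_def)
    have en: "real (add_energy x an \<gamma>) \<ge> r * real an ^ 3" unfolding \<gamma>_def using energy an3 by simp
    obtain B0 where B0: "B0 \<subseteq> {2..an}" "real (card B0) \<ge> (r/10) * (real an - 1) / 12"
      and V: "\<exists>V::int set. finite V \<and> real (card V) \<le> bsgK (r/10) * real an \<and>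
        (\<forall>i\<in>B0. \<forall>j\<in>B0. \<exists>v\<in>V. \<bar>x i - x j - \<gamma> * of_int v\<bar> < \<gamma>)"
      using scale_structure[OF c_pos gaps r_pos _ gpos small abig en] an3 by auto
    obtain V where V: "finite V" "real (card V) \<le> K * real an"
        "\<forall>i\<in>B0. \<forall>j\<in>B0. \<exists>v\<in>V. \<bar>x i - x j - \<gamma> * of_int v\<bar> < \<gamma>"
      using V by (auto simp: K_def)
    define B where "B = B0 \<inter> {ap<..}"
    have fB0: "finite B0" using B0(1) by (rule finite_subset) simp
    have cB0: "card B0 \<le> card B + ap"
    proof -
      have "B0 \<subseteq> B \<union> {1..ap}" using B0(1) by (auto simp: B_def)
      then have "card B0 \<le> card (B \<union> {1..ap})" by (intro card_mono) (auto simp: B_def fB0)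
      also have "\<dots> \<le> card B + card {1..ap}" by (rule card_Un_le)
      finally show ?thesis by simp
    qed
    have cB: "real (card B) \<ge> (c0/4) * real an"
    proof -
      have hB0: "real (card B0) \<ge> c0 * (real an - 1)"
      proof -
        have "c0 * (real an - 1) \<le> (r/120) * (real an - 1)" using an3 by (intro mult_right_mono) (auto simp: c0_def)
        then show ?thesis using B0(2) by simp
      qed
      moreover have "real an \<ge> L * (1 + real ap)"
        using seqa_ge_lin[OF L1, of M] by (simp add: an_def ap_def a_def NM)
      moreover have "L * (1 + real ap) \<ge> (4/(3*c0)) * (1 + real ap)"
        using LA0(4) by (intro mult_right_mono) auto
      moreover have "(4/(3*c0)) * (1 + real ap) \<ge> (4/(3*c0)) * (c0 + real ap)"
        using c01 c0pos by (intro mult_left_mono) auto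
      ultimately have h: "real an \<ge> (4/(3*c0)) * (c0 + real ap)" by linarith
      have "(3*c0/4) * real an \<ge> (3*c0/4) * ((4/(3*c0)) * (c0 + real ap))"
        using h c0pos by (intro mult_left_mono) auto
      also have "(3*c0/4) * ((4/(3*c0)) * (c0 + real ap)) = c0 + real ap" using c0pos by (simp add: field_simps)
      finally have "(3*c0/4) * real an \<ge> c0 + real ap" .
      moreover have "real (card B0) \<le> real (card B) + real ap" using cB0 by linarith
      ultimately have h1: "(3*c0/4) * real an \<ge> c0 + real ap" "real (card B0) \<le> real (card B) + real ap" .
      have e1: "c0*(real an - 1) = c0*real an - c0" by (simp add: algebra_simps)
      have e2: "(3*c0/4)*real an = 3/4*(c0*real an)" "(c0/4)*real an = 1/4*(c0*real an)" by simp_all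
      show ?thesis using h1 hB0 e1 e2 by linarith
    qed
    show ?thesis
    proof (intro exI[of _ "(B, V)"] conjI)
      show "fst (B, V) \<subseteq> {a (N-1)<..a N}" using B0(1) NM by (auto simp: B_def an_def ap_def)
      show "fst (B, V) \<subseteq> {2..}" using B0(1) by (auto simp: B_def)
      show "real (card (fst (B, V))) \<ge> (c0/4) * real (a N)" using cB by (simp add: an_def)
      show "finite (snd (B, V))" using V by simp
      show "real (card (snd (B, V))) \<le> K * real (a N)" using V by (simp add: an_def)
      show "\<forall>i\<in>fst (B, V). \<forall>j\<in>fst (B, V). \<exists>v\<in>snd (B, V). \<bar>x i - x j - (1 / (real (a N) * ln (real (a N)) powr (1+\<epsilon>0))) * of_int v\<bar>
           < 1 / (real (a N) * ln (real (a N)) powr (1+\<epsilon>0))"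
        using V(3) by (auto simp: B_def \<gamma>_def an_def)
    qed
  qed
  then have "\<forall>N. \<exists>BV. N \<ge> 1 \<longrightarrow> (fst BV \<subseteq> {a (N-1)<..a N} \<and> fst BV \<subseteq> {2..} \<and> real (card (fst BV)) \<ge> (c0/4) * real (a N) \<and>
       finite (snd BV) \<and> real (card (snd BV)) \<le> K * real (a N) \<and>
       (\<forall>i\<in>fst BV. \<forall>j\<in>fst BV. \<exists>v\<in>snd BV. \<bar>x i - x j - (1 / (real (a N) * ln (real (a N)) powr (1+\<epsilon>0))) * of_int v\<bar>
           < 1 / (real (a N) * ln (real (a N)) powr (1+\<epsilon>0))))" by blast
  then obtain BV where BV: "\<And>N. N \<ge> 1 \<Longrightarrow> (fst (BV N) \<subseteq> {a (N-1)<..a N} \<and> fst (BV N) \<subseteq> {2..} \<and> real (card (fst (BV N))) \<ge> (c0/4) * real (a N) \<and>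
       finite (snd (BV N)) \<and> real (card (snd (BV N))) \<le> K * real (a N) \<and>
       (\<forall>i\<in>fst (BV N). \<forall>j\<in>fst (BV N). \<exists>v\<in>snd (BV N). \<bar>x i - x j - (1 / (real (a N) * ln (real (a N)) powr (1+\<epsilon>0))) * of_int v\<bar>
           < 1 / (real (a N) * ln (real (a N)) powr (1+\<epsilon>0))))"
    by (metis choice)
  have lnbig: "ln (real (a N)) \<ge> 2^N * (K + 2 * real (a (N-1))) \<and> ln (real (a N)) \<ge> 2^N" if N1: "N \<ge> 1" for N
  proof -
    obtain M where NM: "N = Suc M" using N1 by (cases N) auto
    have h1: "ln (real (a N)) \<ge> 2^N * L * (1 + real (a M))" using seqa_ln[OF L1, of M] by (simp add: a_def NM)
    have h2: "L * (1 + real (a M)) \<ge> K + 2 * real (a M)"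
    proof -
      have "L * real (a M) \<ge> 2 * real (a M)" using LA0(3) by (intro mult_right_mono) auto
      then show ?thesis using LA0(2) by (simp add: algebra_simps)
    qed
    have h3: "(2::real)^N * (L * (1 + real (a M))) \<ge> 2^N * (K + 2 * real (a M))"
      using h2 by (intro mult_left_mono) auto
    have h4: "ln (real (a N)) \<ge> 2^N" using seqa_ln_big[OF L1, of M] by (simp add: a_def NM)
    have e: "(2::real)^N * L * (1 + real (a M)) = 2^N * (L * (1 + real (a M)))" by (simp add: mult.assoc)
    have "2^N * (K + 2 * real (a M)) \<le> ln (real (a N))" using h1 h3 e by linarith
    then show ?thesis using h4 NM by simp
  qed
  show ?thesis
  proof (rule exI[of _ a], rule exI[of _ "\<lambda>N. fst (BV N)"], rule exI[of _ "\<lambda>N. snd (BV N)"], rule exI[of _ K], rule exI[of _ "c0/4"], intro conjI allI impI)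
    show "strict_mono a" unfolding a_def by (rule seqa_mono[OF L1])
  qed (use a3 K0 c0pos lnbig lnA BV in auto)
qed

end

lemma S_loc:
  fixes a :: "nat \<Rightarrow> nat" and B :: "nat \<Rightarrow> nat set"
  assumes amono: "strict_mono a" and Bsub: "\<And>N. N \<ge> 1 \<Longrightarrow> B N \<subseteq> {a (N-1)<..a N}"
    and iS: "i \<in> (\<Union>N\<in>{1..}. B N)" and N1: "N \<ge> 1" and lo: "a (N-1) < i" and hi: "i \<le> a N"
  shows "i \<in> B N"
proof -
  obtain M where M1: "M \<ge> 1" and iM: "i \<in> B M" using iS by auto
  have iM': "a (M-1) < i" "i \<le> a M" using Bsub[OF M1] iM by auto
  have "M = N"
  proof (rule ccontr)
    assume "M \<noteq> N"
    then consider "M < N" | "N < M" by linarith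
    then show False
    proof cases
      case 1 then have "M \<le> N - 1" by simp
      then have "a M \<le> a (N-1)" using amono by (simp add: strict_mono_less_eq)
      then show False using iM' lo by simp
    next
      case 2 then have "N \<le> M - 1" by simp
      then have "a N \<le> a (M-1)" using amono by (simp add: strict_mono_less_eq)
      then show False using iM' hi by simp
    qed
  qed
  then show ?thesis using iM by simp
qed

lemma eta_anti:
  fixes u v s :: real assumes u3: "3 \<le> u" and uv: "u \<le> v" and s0: "s \<ge> 0"
  shows "1/(v * ln v powr s) \<le> 1/(u * ln u powr s)"
proof -
  have lu: "ln u > 0" using u3 by simp
  have luv: "ln u \<le> ln v" using u3 uv by simp
  have p1: "ln u powr s \<le> ln v powr s" using lu luv s0 by (intro powr_mono2) auto
  have p0: "ln u powr s > 0" using lu by simp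
  have "u * ln u powr s \<le> v * ln v powr s" using p1 uv u3 p0 by (intro mult_mono) auto
  moreover have "0 < (v * ln v powr s) * (u * ln u powr s)" using p0 p1 u3 uv by simp
  ultimately show ?thesis by (intro divide_left_mono) auto
qed

context
  fixes x :: "nat \<Rightarrow> real" and c :: real
  assumes c_pos: "c > 0" and gaps: "\<And>n. n \<ge> 1 \<Longrightarrow> x (Suc n) - x n \<ge> c * ln (real n) / real n"
begin

lemma x_sep_abs: fixes i j A :: nat
  assumes "2 \<le> i" "2 \<le> j" "i \<noteq> j" "i \<le> A" "j \<le> A"
  shows "\<bar>x i - x j\<bar> \<ge> c / (2 * real A)"
proof (cases "i < j")
  case True
  then have "x j - x i \<ge> c / (2 * real A)" using assms by (intro x_sep[OF c_pos gaps]) auto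
  then show ?thesis by linarith
next
  case False
  then have "j < i" using assms by simp
  then have "x i - x j \<ge> c / (2 * real A)" using assms by (intro x_sep[OF c_pos gaps]) auto
  then show ?thesis by linarith
qed

lemma AE_nonint:
  "AE \<alpha> in lborel. \<forall>i j. 2 \<le> i \<longrightarrow> 2 \<le> j \<longrightarrow> i \<noteq> j \<longrightarrow> dist_int (\<alpha> * x i - \<alpha> * x j) > 0"
proof -
  define Z where "Z = (\<lambda>(i,j,k). of_int k / (x i - x j)) ` (UNIV :: (nat \<times> nat \<times> int) set)"
  have "countable Z" unfolding Z_def by simp
  then have "AE \<alpha> in lborel. \<alpha> \<notin> Z" by (intro AE_not_in countable_imp_null_set_lborel)
  then show ?thesis
  proof (rule AE_mp, intro AE_I2 impI allI)
    fix \<alpha> :: real and i j :: nat assume aZ: "\<alpha> \<notin> Z" and ij: "2 \<le> i" "2 \<le> j" "i \<noteq> j"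
    have "\<bar>x i - x j\<bar> \<ge> c / (2 * real (max i j))" using ij by (intro x_sep_abs) auto
    moreover have "c / (2 * real (max i j)) > 0" using c_pos ij by simp
    ultimately have dne: "x i - x j \<noteq> 0" by linarith
    have "\<forall>k::int. \<alpha> * x i - \<alpha> * x j \<noteq> of_int k"
    proof
      fix k :: int
      show "\<alpha> * x i - \<alpha> * x j \<noteq> of_int k"
      proof
        assume "\<alpha> * x i - \<alpha> * x j = of_int k"
        then have "\<alpha> = of_int k / (x i - x j)" using dne by (simp add: field_simps)
        then have "\<alpha> \<in> Z" unfolding Z_def by (intro image_eqI[of _ _ "(i,j,k)"]) auto
        then show False using aZ by simp
      qed
    qed
    then show "dist_int (\<alpha> * x i - \<alpha> * x j) > 0" by (rule dist_int_pos)
  qed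
qed


lemma BC_part:
  fixes a :: "nat \<Rightarrow> nat" and B :: "nat \<Rightarrow> nat set" and V :: "nat \<Rightarrow> int set" and K \<epsilon> \<epsilon>0 mm :: real
  assumes amono: "strict_mono a" and a3: "\<And>N. a N \<ge> 3" and K0: "K \<ge> 0" and eps: "\<epsilon> > 0" and eps0: "\<epsilon>0 > 0"
    and lnbig: "\<And>N. N \<ge> 1 \<Longrightarrow> ln (real (a N)) \<ge> 2^N * (K + 2 * real (a (N-1))) \<and> ln (real (a N)) \<ge> 2^N"
    and Bsub: "\<And>N. N \<ge> 1 \<Longrightarrow> B N \<subseteq> {a (N-1)<..a N} \<and> B N \<subseteq> {2..}"
    and Vprop: "\<And>N. N \<ge> 1 \<Longrightarrow> finite (V N) \<and> real (card (V N)) \<le> K * real (a N) \<and>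
       (\<forall>i\<in>B N. \<forall>j\<in>B N. \<exists>v\<in>V N. \<bar>x i - x j - (1 / (real (a N) * ln (real (a N)) powr (1+\<epsilon>0))) * of_int v\<bar>
           < 1 / (real (a N) * ln (real (a N)) powr (1+\<epsilon>0)))"
    and mm1: "mm \<ge> 1"
  shows "AE \<alpha> in lborel. (1/mm \<le> \<bar>\<alpha>\<bar> \<and> \<bar>\<alpha>\<bar> \<le> mm) \<longrightarrow> (\<exists>N0. \<forall>N\<ge>N0.
      \<forall>i\<in>(\<Union>N\<in>{1..}. B N). \<forall>j\<in>(\<Union>N\<in>{1..}. B N). i \<noteq> j \<longrightarrow> i \<le> a N \<longrightarrow> j \<le> a N \<longrightarrow> (a (N-1) < i \<or> a (N-1) < j) \<longrightarrow>
        dist_int (\<alpha> * x i - \<alpha> * x j) \<ge> 1 / (real (a N) * ln (real (a N)) powr (1+\<epsilon>)))"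
proof -
  define S where "S = (\<Union>N\<in>{1..}. B N)"
  define A where "A N = real (a N)" for N
  define \<eta> where "\<eta> N = 1 / (A N * ln (A N) powr (1+\<epsilon>))" for N
  define \<gamma> where "\<gamma> N = 1 / (A N * ln (A N) powr (1+\<epsilon>0))" for N
  define \<eta>' where "\<eta>' N = \<eta> N + mm * \<gamma> N" for N
  define D where "D N = (\<lambda>v. \<gamma> N * of_int v) ` V N \<union>
      (\<lambda>(i,j). x i - x j) ` ({1..a N} \<times> {1..a (N-1)} \<union> {1..a (N-1)} \<times> {1..a N})" for N
  define Cs where "Cs N = (if N = 0 then {} else \<Union>d\<in>D N. cov mm (\<eta>' N) d)" for N
  have A3: "A N \<ge> 3" for N using a3[of N] by (simp add: A_def)
  have lnA1: "ln (A N) \<ge> 1" if "N \<ge> 1" for N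
  proof -
    have h: "(1::real) \<le> 2^N" by (rule one_le_power) simp
    have "ln (real (a N)) \<ge> 2^N" using lnbig[OF that] by simp
    then show ?thesis using h unfolding A_def by linarith
  qed
  have eta_b: "\<eta> N \<le> 1 / (A N * ln (A N))" "\<eta> N > 0" if "N \<ge> 1" for N
    using inv_powr_le[of "A N" \<epsilon>] A3[of N] lnA1[OF that] eps by (auto simp: \<eta>_def)
  have gam_b: "\<gamma> N \<le> 1 / (A N * ln (A N))" "\<gamma> N > 0" if "N \<ge> 1" for N
    using inv_powr_le[of "A N" \<epsilon>0] A3[of N] lnA1[OF that] eps0 by (auto simp: \<gamma>_def)
  have eta'_b: "\<eta>' N \<le> (1 + mm) / (A N * ln (A N))" "\<eta>' N > 0" if "N \<ge> 1" for N
  proof -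
    have "mm * \<gamma> N \<le> mm * (1 / (A N * ln (A N)))" using gam_b[OF that] mm1 by (intro mult_left_mono) auto
    moreover have "(1 + mm) / (A N * ln (A N)) = 1 / (A N * ln (A N)) + mm * (1 / (A N * ln (A N)))"
      by (simp add: add_divide_distrib)
    ultimately show "\<eta>' N \<le> (1 + mm) / (A N * ln (A N))" using eta_b[OF that] unfolding \<eta>'_def by linarith
    show "\<eta>' N > 0" using eta_b[OF that] gam_b[OF that] mm1 unfolding \<eta>'_def by (simp add: add_pos_pos)
  qed
  have fD: "finite (D N)" if "N \<ge> 1" for N using Vprop[OF that] by (simp add: D_def)
  have cD: "real (card (D N)) \<le> K * A N + 2 * A N * A (N-1)" if "N \<ge> 1" for N
  proof -
    have "card (D N) \<le> card ((\<lambda>v. \<gamma> N * of_int v) ` V N) +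
        card ((\<lambda>(i,j). x i - x j) ` ({1..a N} \<times> {1..a (N-1)} \<union> {1..a (N-1)} \<times> {1..a N}))"
      unfolding D_def by (rule card_Un_le)
    also have "\<dots> \<le> card (V N) + card ({1..a N} \<times> {1..a (N-1)} \<union> {1..a (N-1)} \<times> {1..a N})"
      by (intro add_mono card_image_le) (use Vprop[OF that] in auto)
    also have "\<dots> \<le> card (V N) + (card ({1..a N} \<times> {1..a (N-1)}) + card ({1..a (N-1)} \<times> {1..a N}))"
      by (intro add_left_mono card_Un_le)
    also have "\<dots> = card (V N) + 2 * (a N * a (N-1))" by (simp add: card_cartesian_product)
    finally have "real (card (D N)) \<le> real (card (V N)) + 2 * (A N * A (N-1))"
      unfolding A_def by (metis of_nat_add of_nat_le_iff of_nat_mult of_nat_numeral)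
    then show ?thesis using Vprop[OF that] by (simp add: A_def)
  qed
  have Cs_sets: "Cs N \<in> sets lborel" for N
  proof (cases "N = 0")
    case True then show ?thesis by (simp add: Cs_def)
  next
    case False
    then have "N \<ge> 1" by simp
    then have "(\<Union>d\<in>D N. cov mm (\<eta>' N) d) \<in> sets lborel"
      by (intro sets.finite_UN fD cov_sets)
    then show ?thesis using False by (simp add: Cs_def)
  qed
  have Cs_fin: "emeasure lborel (Cs N) < \<infinity>" for N
  proof (cases "N = 0")
    case True then show ?thesis by (simp add: Cs_def)
  next
    case False
    then have "N \<ge> 1" by simp
    then have "bounded (Cs N)" using fD[of N] False by (auto simp: Cs_def cov_bounded)
    then show ?thesis by (rule emeasure_bounded_finite)
  qed
  have Cs_meas: "measure lborel (Cs N) \<le> 20 * mm * (1 + mm) * (1/2)^N" for N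
  proof (cases "N = 0")
    case True then show ?thesis using mm1 by (simp add: Cs_def)
  next
    case False
    then have N1: "N \<ge> 1" by simp
    have "measure lborel (Cs N) = measure lborel (\<Union>d\<in>D N. cov mm (\<eta>' N) d)"
      using False by (simp add: Cs_def)
    also have "\<dots> \<le> (\<Sum>d\<in>D N. measure lborel (cov mm (\<eta>' N) d))"
      by (rule measure_UNION_le[OF fD[OF N1] cov_sets])
    also have "\<dots> \<le> (\<Sum>d\<in>D N. 20 * mm * \<eta>' N)"
      using mm1 eta'_b[OF N1] by (intro sum_mono cov_measure) auto
    also have "\<dots> = real (card (D N)) * (20 * mm * \<eta>' N)" by simp
    also have "\<dots> \<le> (K * A N + 2 * A N * A (N-1)) * (20 * mm * ((1 + mm) / (A N * ln (A N))))"
      using cD[OF N1] eta'_b[OF N1] mm1 by (intro mult_mono) auto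
    also have "\<dots> = 20 * mm * (1 + mm) * ((K + 2 * A (N-1)) / ln (A N))"
      using A3[of N] lnA1[OF N1] by (simp add: field_simps)
    also have "\<dots> \<le> 20 * mm * (1 + mm) * (1/2)^N"
    proof (rule mult_left_mono)
      have lnpos: "ln (A N) > 0" using lnA1[OF N1] by linarith
      have "ln (A N) \<ge> 2^N * (K + 2 * A (N-1))" using lnbig[OF N1] by (simp add: A_def)
      then have "(K + 2 * A (N-1)) \<le> ln (A N) * (1/2)^N"
        by (simp add: field_simps power_one_over)
      then show "(K + 2 * A (N-1)) / ln (A N) \<le> (1/2)^N" using lnpos by (simp add: divide_le_eq mult.commute)
      show "0 \<le> 20 * mm * (1 + mm)" using mm1 by simp
    qed
    finally show ?thesis .
  qed
  have summ: "summable (\<lambda>N. measure lborel (Cs N))"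
  proof (rule summable_comparison_test'[where N=0])
    show "summable (\<lambda>N. 20 * mm * (1 + mm) * (1/2::real)^N)"
      by (intro summable_mult summable_geometric) simp
    show "norm (measure lborel (Cs N)) \<le> 20 * mm * (1 + mm) * (1/2)^N" for N
      using Cs_meas[of N] by simp
  qed
  have BC: "AE \<alpha> in lborel. eventually (\<lambda>N. \<alpha> \<in> space lborel - Cs N) sequentially"
    by (rule borel_cantelli_AE1[OF Cs_sets Cs_fin summ])
  define \<Lambda> where "\<Lambda> = max (4 * (1 + mm)) (2 * (1 + mm + mm * mm) / c)"
  show ?thesis
  proof (rule AE_mp[OF BC], intro AE_I2 impI)
    fix \<alpha> :: real
    assume ev: "eventually (\<lambda>N. \<alpha> \<in> space lborel - Cs N) sequentially"
      and ab: "1/mm \<le> \<bar>\<alpha>\<bar> \<and> \<bar>\<alpha>\<bar> \<le> mm"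
    obtain N2 where N2: "\<And>N. N \<ge> N2 \<Longrightarrow> \<alpha> \<notin> Cs N" using ev by (auto simp: eventually_sequentially)
    define N0 where "N0 = max (max N2 1) (nat \<lceil>\<Lambda>\<rceil>)"
    show "\<exists>N0. \<forall>N\<ge>N0. \<forall>i\<in>(\<Union>N\<in>{1..}. B N). \<forall>j\<in>(\<Union>N\<in>{1..}. B N). i \<noteq> j \<longrightarrow> i \<le> a N \<longrightarrow> j \<le> a N \<longrightarrow> (a (N-1) < i \<or> a (N-1) < j) \<longrightarrow>
        dist_int (\<alpha> * x i - \<alpha> * x j) \<ge> 1 / (real (a N) * ln (real (a N)) powr (1+\<epsilon>))"
    proof (intro exI[of _ N0] allI impI ballI)
      fix N i j assume NN0: "N0 \<le> N" and iS: "i \<in> (\<Union>N\<in>{1..}. B N)" and jS: "j \<in> (\<Union>N\<in>{1..}. B N)" and ij: "i \<noteq> j" and ia: "i \<le> a N" and ja: "j \<le> a N"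
        and out: "a (N-1) < i \<or> a (N-1) < j"
      have N1: "N \<ge> 1" using NN0 by (simp add: N0_def)
      have notC: "\<alpha> \<notin> Cs N" using N2 NN0 by (simp add: N0_def)
      have i2: "i \<ge> 2" and j2: "j \<ge> 2" using iS jS Bsub by (auto simp: S_def)
      have lnL: "ln (A N) \<ge> \<Lambda>"
      proof -
        have "real N < 2^N" by (metis of_nat_less_two_power)
        moreover have "real N \<ge> \<Lambda>" using NN0 by (simp add: N0_def)
        moreover have "ln (real (a N)) \<ge> 2^N" using lnbig[OF N1] by simp
        ultimately show ?thesis unfolding A_def by linarith
      qed
      have lnpos: "ln (A N) > 0" using lnA1[OF N1] by linarith
      have Apos: "A N > 0" using A3[of N] by simp
      have e14: "\<eta>' N \<le> 1/4"
      proof -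
        have "\<eta>' N \<le> (1 + mm) / (A N * ln (A N))" by (rule eta'_b(1)[OF N1])
        also have "\<dots> \<le> (1 + mm) / ln (A N)"
          using A3[of N] lnpos mm1 by (intro divide_left_mono) (auto simp: mult_le_cancel_right1)
        also have "\<dots> \<le> 1/4"
        proof -
          have "4 * (1 + mm) \<le> ln (A N)" using lnL by (simp add: \<Lambda>_def)
          then show ?thesis using lnpos by (simp add: field_simps)
        qed
        finally show ?thesis .
      qed
      have sepb: "mm * \<eta>' N + \<gamma> N \<le> c / (2 * A N)"
      proof -
        have "mm * \<eta>' N + \<gamma> N \<le> mm * ((1 + mm) / (A N * ln (A N))) + 1 / (A N * ln (A N))"
          using eta'_b(1)[OF N1] gam_b(1)[OF N1] mm1 by (intro add_mono mult_left_mono) auto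
        also have "\<dots> = (1 + mm + mm * mm) / (A N * ln (A N))" using Apos lnpos by (simp add: field_simps)
        also have "\<dots> \<le> c / (2 * A N)"
        proof -
          have "2 * (1 + mm + mm * mm) / c \<le> ln (A N)" using lnL by (simp add: \<Lambda>_def)
          then have "2 * (1 + mm + mm * mm) \<le> c * ln (A N)" using c_pos by (simp add: field_simps)
          then have "(2 * (1 + mm + mm * mm)) / (2 * A N * ln (A N)) \<le> (c * ln (A N)) / (2 * A N * ln (A N))"
            using Apos lnpos by (intro divide_right_mono) auto
          moreover have "(2 * (1 + mm + mm * mm)) / (2 * A N * ln (A N)) = (1 + mm + mm * mm) / (A N * ln (A N))"
            unfolding mult.assoc[of 2] by (rule mult_divide_mult_cancel_left) simp
          moreover have "(c * ln (A N)) / (2 * A N * ln (A N)) = c / (2 * A N)" using lnpos by simp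
          ultimately show ?thesis by simp
        qed
        finally show ?thesis .
      qed
      have sep: "\<bar>x i - x j\<bar> \<ge> c / (2 * A N)" using x_sep_abs[OF i2 j2 ij ia ja] by (simp add: A_def)
      show "dist_int (\<alpha> * x i - \<alpha> * x j) \<ge> 1 / (real (a N) * ln (real (a N)) powr (1+\<epsilon>))"
      proof (rule ccontr)
        assume "\<not> ?thesis"
        then have "dist_int (\<alpha> * (x i - x j)) < \<eta> N" by (simp add: \<eta>_def A_def algebra_simps)
        then obtain k :: int where k: "\<bar>\<alpha> * (x i - x j) - of_int k\<bar> < \<eta> N" using dist_int_lt by blast
        have mmpos: "mm > 0" using mm1 by simp
        have cov_in: "\<alpha> \<in> Cs N" if dD: "d \<in> D N" and dk: "\<bar>\<alpha> * d - of_int k\<bar> < \<eta>' N" and db: "\<bar>d\<bar> \<ge> mm * \<eta>' N" for d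
        proof -
          have "\<alpha> \<in> cov mm (\<eta>' N) d"
            using cov_cover[OF mmpos eta'_b(2)[OF N1] e14 db _ _ dk] ab by auto
          then show ?thesis using dD N1 by (auto simp: Cs_def)
        qed
        show False
        proof (cases "a (N-1) < i \<and> a (N-1) < j")
          case True
          then have iB: "i \<in> B N" and jB: "j \<in> B N"
            using S_loc[OF amono, of B] Bsub iS jS N1 ia ja by (auto simp: S_def)
          obtain v where vV: "v \<in> V N" and v: "\<bar>x i - x j - \<gamma> N * of_int v\<bar> < \<gamma> N"
            using Vprop[OF N1] iB jB by (auto simp: \<gamma>_def A_def)
          define d where "d = \<gamma> N * of_int v"
          have dD: "d \<in> D N" using vV by (auto simp: D_def d_def)
          have "\<bar>\<alpha> * d - of_int k\<bar> \<le> \<bar>\<alpha> * (x i - x j) - of_int k\<bar> + \<bar>\<alpha>\<bar> * \<bar>x i - x j - d\<bar>"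
          proof -
            have "\<alpha> * d - of_int k = (\<alpha> * (x i - x j) - of_int k) - \<alpha> * (x i - x j - d)" by (simp add: algebra_simps)
            moreover have "\<bar>(\<alpha> * (x i - x j) - of_int k) - \<alpha> * (x i - x j - d)\<bar> \<le> \<bar>\<alpha> * (x i - x j) - of_int k\<bar> + \<bar>\<alpha> * (x i - x j - d)\<bar>"
              by (rule abs_triangle_ineq4)
            ultimately show ?thesis by (simp add: abs_mult)
          qed
          also have "\<dots> < \<eta> N + mm * \<gamma> N"
          proof -
            have "\<bar>\<alpha>\<bar> * \<bar>x i - x j - d\<bar> \<le> mm * \<gamma> N"
              using ab v gam_b(2)[OF N1] unfolding d_def by (intro mult_mono) auto
            then show ?thesis using k by linarith
          qed
          finally have dk: "\<bar>\<alpha> * d - of_int k\<bar> < \<eta>' N" by (simp add: \<eta>'_def)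
          have "\<bar>d\<bar> \<ge> \<bar>x i - x j\<bar> - \<gamma> N" using v unfolding d_def by linarith
          then have "\<bar>d\<bar> \<ge> mm * \<eta>' N" using sep sepb by linarith
          then have "\<alpha> \<in> Cs N" using cov_in[OF dD dk] by simp
          then show False using notC by simp
        next
          case False
          then have pair: "(i, j) \<in> {1..a N} \<times> {1..a (N-1)} \<union> {1..a (N-1)} \<times> {1..a N}"
            using out i2 j2 ia ja by auto
          define d where "d = x i - x j"
          have dD: "d \<in> D N" using pair unfolding D_def d_def by (auto intro!: image_eqI[of _ _ "(i,j)"])
          have dk: "\<bar>\<alpha> * d - of_int k\<bar> < \<eta>' N"
            using k gam_b(2)[OF N1] mm1 unfolding d_def \<eta>'_def by (smt (verit) mult_nonneg_nonneg)
          have "\<bar>d\<bar> \<ge> mm * \<eta>' N" using sep sepb gam_b(2)[OF N1] unfolding d_def by linarith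
          then have "\<alpha> \<in> Cs N" using cov_in[OF dD dk] by simp
          then show False using notC by simp
        qed
      qed
    qed
  qed
qed

end

theorem corollary1:
  fixes x :: "nat \<Rightarrow> real" and c \<epsilon>0 r :: real
  assumes c_pos: "c > 0"
    and gaps: "\<And>n. n \<ge> 1 \<Longrightarrow> x (Suc n) - x n \<ge> c * ln (real n) / real n"
    and eps0_pos: "\<epsilon>0 > 0"
    and r_pos: "r > 0"
    and energy: "\<And>N. N \<ge> 2 \<Longrightarrow>
       real (add_energy x N (1 / (real N * ln (real N) powr (1 + \<epsilon>0)))) \<ge> r * real N ^ 3"
  shows "\<exists>(nk :: nat \<Rightarrow> nat) (a :: nat \<Rightarrow> nat).
     strict_mono_on {1..} nk \<and> strict_mono_on {1..} a \<and> nk 1 \<ge> 1 \<and> a 1 \<ge> 1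
     \<and> (\<exists>c' > 0. \<forall>N \<ge> 1. real (card {k. k \<ge> 1 \<and> nk k \<le> a N}) \<ge> c' * real (a N))
     \<and> (\<forall>\<epsilon> > 0. AE \<alpha> in lborel. \<exists>C > 0. \<forall>N \<ge> 1. \<forall>k \<ge> 1. \<forall>l \<ge> 1.
          k \<noteq> l \<longrightarrow> nk k \<le> a N \<longrightarrow> nk l \<le> a N \<longrightarrow>
          dist_int (\<alpha> * x (nk k) - \<alpha> * x (nk l))
            \<ge> C / (real (a N) * ln (real (a N)) powr (1 + \<epsilon>)))"
proof -
  obtain a B V K c1 where amono: "strict_mono a" and a3: "\<forall>N. a N \<ge> 3" and K0: "K \<ge> 0" and c1: "c1 > 0" and
    lnb: "\<forall>N\<ge>1. ln (real (a N)) \<ge> 2^N * (K + 2 * real (a (N-1))) \<and> ln (real (a N)) \<ge> 2^N \<and> ln (real (a N)) \<ge> 1 + 4/c" and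
    Bp: "\<forall>N\<ge>1. B N \<subseteq> {a (N-1)<..a N} \<and> B N \<subseteq> {2..} \<and> real (card (B N)) \<ge> c1 * real (a N)" and
    Vp: "\<forall>N\<ge>1. finite (V N) \<and> real (card (V N)) \<le> K * real (a N) \<and>
       (\<forall>i\<in>B N. \<forall>j\<in>B N. \<exists>v\<in>V N. \<bar>x i - x j - (1 / (real (a N) * ln (real (a N)) powr (1+\<epsilon>0))) * of_int v\<bar>
           < 1 / (real (a N) * ln (real (a N)) powr (1+\<epsilon>0)))"
    using construct[OF c_pos gaps eps0_pos r_pos energy] by blast
  define S where "S = (\<Union>N\<in>{1..}. B N)"
  have S2: "i \<in> S \<Longrightarrow> i \<ge> 2" for i using Bp by (auto simp: S_def)
  have Bne: "B N \<noteq> {}" if "N \<ge> 1" for N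
  proof
    assume "B N = {}"
    then have "real (card (B N)) = 0" by simp
    moreover have "c1 * real (a N) > 0"
    proof -
      have "a N \<ge> 3" using a3 by blast
      then have "real (a N) > 0" by simp
      then show ?thesis using c1 by (rule mult_pos_pos[rotated])
    qed
    ultimately show False using Bp that by force
  qed
  have Sinf: "infinite S"
  proof (unfold infinite_nat_iff_unbounded_le, intro allI)
    fix m
    obtain i where "i \<in> B (Suc m)" using Bne[of "Suc m"] by auto
    moreover have "a m \<ge> m" using amono by (rule strict_mono_imp_increasing)
    ultimately have "i \<in> S" "i \<ge> m" using Bp by (auto simp: S_def, force)
    then show "\<exists>n\<ge>m. n \<in> S" by blast
  qed
  define nk where "nk k = enumerate S (k - 1)" for k
  have nkS: "nk k \<in> S" for k using enumerate_in_set[OF Sinf] by (simp add: nk_def)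
  have nk_mono: "strict_mono_on {1..} nk"
    unfolding strict_mono_on_def nk_def by (auto intro!: enumerate_mono[OF _ Sinf])
  have nk_inj: "nk k \<noteq> nk l" if "k \<ge> 1" "l \<ge> 1" "k \<noteq> l" for k l
  proof -
    have "k - 1 \<noteq> l - 1" using that by simp
    then show ?thesis using inj_enumerate[OF Sinf] unfolding nk_def by (auto dest: injD)
  qed
  have dens: "\<forall>N \<ge> 1. real (card {k. k \<ge> 1 \<and> nk k \<le> a N}) \<ge> (c1) * real (a N)"
  proof (intro allI impI)
    fix N :: nat assume N1: "N \<ge> 1"
    have "card {k. k \<ge> 1 \<and> nk k \<le> a N} = card (S \<inter> {..a N})"
      unfolding nk_def by (rule card_enum_le[OF Sinf])
    moreover have "card (B N) \<le> card (S \<inter> {..a N})"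
    proof (rule card_mono)
      show "finite (S \<inter> {..a N})" by simp
      have "B N \<subseteq> {a (N-1)<..a N}" using Bp N1 by blast
      then show "B N \<subseteq> S \<inter> {..a N}" using N1 unfolding S_def by auto
    qed
    moreover have "c1 * real (a N) \<le> real (card (B N))" using Bp N1 by blast
    ultimately show "real (card {k. k \<ge> 1 \<and> nk k \<le> a N}) \<ge> c1 * real (a N)"
      by (metis of_nat_le_iff order_trans)
  qed
  have metric: "AE \<alpha> in lborel. \<exists>C > 0. \<forall>N \<ge> 1. \<forall>k \<ge> 1. \<forall>l \<ge> 1.
          k \<noteq> l \<longrightarrow> nk k \<le> a N \<longrightarrow> nk l \<le> a N \<longrightarrow>
          dist_int (\<alpha> * x (nk k) - \<alpha> * x (nk l))
            \<ge> C / (real (a N) * ln (real (a N)) powr (1 + \<epsilon>))" if eps: "\<epsilon> > 0" for \<epsilon>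
  proof -
    define \<eta> where "\<eta> N = 1 / (real (a N) * ln (real (a N)) powr (1 + \<epsilon>))" for N
    have lnA1: "ln (real (a N)) \<ge> 1" if "N \<ge> 1" for N
    proof -
      have "ln (real (a N)) \<ge> 1 + 4/c" using lnb that by blast
      moreover have "4/c > 0" using c_pos by simp
      ultimately show ?thesis by linarith
    qed
    have A3: "real (a N) \<ge> 3" for N using a3 by (metis of_nat_le_iff of_nat_numeral)
    have eta_pos: "\<eta> N > 0" and eta_le1: "\<eta> N \<le> 1" if "N \<ge> 1" for N
    proof -
      have h: "\<eta> N \<le> 1 / (real (a N) * ln (real (a N)))" "\<eta> N > 0"
        using inv_powr_le[of "real (a N)" \<epsilon>] A3[of N] lnA1[OF that] eps by (auto simp: \<eta>_def)
      then show "\<eta> N > 0" by simp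
      have "real (a N) * ln (real (a N)) \<ge> 1 * 1" using A3[of N] lnA1[OF that] by (intro mult_mono) auto
      then have "1 / (real (a N) * ln (real (a N))) \<le> 1" by simp
      then show "\<eta> N \<le> 1" using h by linarith
    qed
    have eta_anti': "\<eta> N \<le> \<eta> M" if "M \<le> N" for M N
      unfolding \<eta>_def using A3[of M] eps that amono
      by (intro eta_anti) (auto simp: strict_mono_less_eq)
    have AEn: "AE \<alpha> in lborel. \<alpha> \<noteq> 0" by (rule AE_lborel_singleton)
    have AEi: "AE \<alpha> in lborel. \<forall>i j. 2 \<le> i \<longrightarrow> 2 \<le> j \<longrightarrow> i \<noteq> j \<longrightarrow> dist_int (\<alpha> * x i - \<alpha> * x j) > 0"
      by (rule AE_nonint[OF c_pos gaps])
    have a3': "\<And>N. 3 \<le> a N" using a3 by blast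
    have lnb': "\<And>N. 1 \<le> N \<Longrightarrow> 2^N * (K + 2 * real (a (N-1))) \<le> ln (real (a N)) \<and> 2^N \<le> ln (real (a N))"
      using lnb by blast
    have Bp': "\<And>N. 1 \<le> N \<Longrightarrow> B N \<subseteq> {a (N-1)<..a N} \<and> B N \<subseteq> {2..}" using Bp by blast
    have Vp': "\<And>N. 1 \<le> N \<Longrightarrow> finite (V N) \<and> real (card (V N)) \<le> K * real (a N) \<and>
       (\<forall>i\<in>B N. \<forall>j\<in>B N. \<exists>v\<in>V N. \<bar>x i - x j - (1 / (real (a N) * ln (real (a N)) powr (1+\<epsilon>0))) * of_int v\<bar>
           < 1 / (real (a N) * ln (real (a N)) powr (1+\<epsilon>0)))" using Vp by blast
    have AEm: "AE \<alpha> in lborel. \<forall>m::nat. (1/real (Suc m) \<le> \<bar>\<alpha>\<bar> \<and> \<bar>\<alpha>\<bar> \<le> real (Suc m)) \<longrightarrow> (\<exists>N0. \<forall>N\<ge>N0.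
      \<forall>i\<in>S. \<forall>j\<in>S. i \<noteq> j \<longrightarrow> i \<le> a N \<longrightarrow> j \<le> a N \<longrightarrow> (a (N-1) < i \<or> a (N-1) < j) \<longrightarrow>
        dist_int (\<alpha> * x i - \<alpha> * x j) \<ge> \<eta> N)"
      unfolding AE_all_countable S_def \<eta>_def
    proof
      fix m :: nat
      show "AE \<alpha> in lborel. (1/real (Suc m) \<le> \<bar>\<alpha>\<bar> \<and> \<bar>\<alpha>\<bar> \<le> real (Suc m)) \<longrightarrow> (\<exists>N0. \<forall>N\<ge>N0.
      \<forall>i\<in>(\<Union>N\<in>{1..}. B N). \<forall>j\<in>(\<Union>N\<in>{1..}. B N). i \<noteq> j \<longrightarrow> i \<le> a N \<longrightarrow> j \<le> a N \<longrightarrow> (a (N-1) < i \<or> a (N-1) < j) \<longrightarrow>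
        dist_int (\<alpha> * x i - \<alpha> * x j) \<ge> 1 / (real (a N) * ln (real (a N)) powr (1 + \<epsilon>)))"
        using BC_part[OF c_pos gaps amono a3' K0 eps eps0_pos lnb' Bp' Vp', of "real (Suc m)"] by simp
    qed
    show ?thesis
    proof (rule AE_mp[OF AEn], rule AE_mp[OF AEi], rule AE_mp[OF AEm], intro AE_I2 impI)
      fix \<alpha> :: real
      assume Hm: "\<forall>m::nat. (1/real (Suc m) \<le> \<bar>\<alpha>\<bar> \<and> \<bar>\<alpha>\<bar> \<le> real (Suc m)) \<longrightarrow> (\<exists>N0. \<forall>N\<ge>N0.
      \<forall>i\<in>S. \<forall>j\<in>S. i \<noteq> j \<longrightarrow> i \<le> a N \<longrightarrow> j \<le> a N \<longrightarrow> (a (N-1) < i \<or> a (N-1) < j) \<longrightarrow>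
        dist_int (\<alpha> * x i - \<alpha> * x j) \<ge> \<eta> N)"
        and Hi: "\<forall>i j. 2 \<le> i \<longrightarrow> 2 \<le> j \<longrightarrow> i \<noteq> j \<longrightarrow> dist_int (\<alpha> * x i - \<alpha> * x j) > 0"
        and Hn: "\<alpha> \<noteq> 0"
      define m where "m = nat \<lceil>\<bar>\<alpha>\<bar> + 1/\<bar>\<alpha>\<bar>\<rceil>"
      have apos: "\<bar>\<alpha>\<bar> > 0" using Hn by simp
      have mge: "real (Suc m) \<ge> \<bar>\<alpha>\<bar> + 1/\<bar>\<alpha>\<bar>" unfolding m_def by linarith
      have m1: "\<bar>\<alpha>\<bar> \<le> real (Suc m)" using mge apos by (smt (verit) divide_pos_pos)
      have m2: "1/real (Suc m) \<le> \<bar>\<alpha>\<bar>"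
      proof -
        have "1/\<bar>\<alpha>\<bar> \<le> real (Suc m)" using mge apos by (smt (verit) divide_pos_pos)
        then show ?thesis using apos by (simp add: field_simps)
      qed
      obtain N0 where N0: "\<And>N. N \<ge> N0 \<Longrightarrow> \<forall>i\<in>S. \<forall>j\<in>S. i \<noteq> j \<longrightarrow> i \<le> a N \<longrightarrow> j \<le> a N \<longrightarrow> (a (N-1) < i \<or> a (N-1) < j) \<longrightarrow>
        dist_int (\<alpha> * x i - \<alpha> * x j) \<ge> \<eta> N"
        using Hm m1 m2 by blast
      define N1 where "N1 = max N0 1"
      define Fin where "Fin = {p \<in> {..a N1} \<times> {..a N1}. fst p \<in> S \<and> snd p \<in> S \<and> fst p \<noteq> snd p}"
      define Dv where "Dv = (\<lambda>p. dist_int (\<alpha> * x (fst p) - \<alpha> * x (snd p))) ` Fin"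
      define C where "C = Min (insert 1 Dv)"
      have fDv: "finite Dv" unfolding Dv_def Fin_def by simp
      have Cpos: "C > 0"
      proof -
        have "\<forall>d\<in>insert 1 Dv. 0 < d"
        proof
          fix d assume "d \<in> insert 1 Dv"
          then consider "d = 1" | "d \<in> Dv" by blast
          then show "0 < d"
          proof cases
            case 2
            then obtain i j where "i \<in> S" "j \<in> S" "i \<noteq> j" "d = dist_int (\<alpha> * x i - \<alpha> * x j)"
              by (auto simp: Dv_def Fin_def)
            then show ?thesis using Hi S2 by auto
          qed simp
        qed
        then show ?thesis unfolding C_def using fDv by (simp add: Min_gr_iff)
      qed
      have C1: "C \<le> 1" unfolding C_def using fDv by simp
      have CD: "C \<le> d" if "d \<in> Dv" for d unfolding C_def using fDv that by simp
      show "\<exists>C > 0. \<forall>N \<ge> 1. \<forall>k \<ge> 1. \<forall>l \<ge> 1.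
          k \<noteq> l \<longrightarrow> nk k \<le> a N \<longrightarrow> nk l \<le> a N \<longrightarrow>
          dist_int (\<alpha> * x (nk k) - \<alpha> * x (nk l))
            \<ge> C / (real (a N) * ln (real (a N)) powr (1 + \<epsilon>))"
      proof (intro exI[of _ C] conjI allI impI Cpos)
        fix N k l :: nat assume N1': "N \<ge> 1" and k1: "k \<ge> 1" and l1: "l \<ge> 1" and kl: "k \<noteq> l"
          and ka: "nk k \<le> a N" and la: "nk l \<le> a N"
        define i where "i = nk k"
        define j where "j = nk l"
        have iS: "i \<in> S" and jS: "j \<in> S" by (simp_all add: i_def j_def nkS)
        have ij: "i \<noteq> j" using nk_inj[OF k1 l1 kl] by (simp add: i_def j_def)
        have goal_eq: "C / (real (a N) * ln (real (a N)) powr (1 + \<epsilon>)) = C * \<eta> N" by (simp add: \<eta>_def)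
        have CetaN: "C * \<eta> N \<le> C" using eta_le1[OF N1'] Cpos by (simp add: mult_left_le)
        have CetaN2: "C * \<eta> N \<le> \<eta> N" using C1 eta_pos[OF N1'] by (simp add: mult_le_cancel_right1)
        have "dist_int (\<alpha> * x i - \<alpha> * x j) \<ge> C * \<eta> N"
        proof (cases "i \<le> a N1 \<and> j \<le> a N1")
          case True
          then have "dist_int (\<alpha> * x i - \<alpha> * x j) \<in> Dv"
            using iS jS ij unfolding Dv_def Fin_def by (intro image_eqI[of _ _ "(i,j)"]) auto
          then show ?thesis using CD CetaN by fastforce
        next
          case False
          define mx where "mx = max i j"
          have mxN: "mx \<le> a N" using ka la by (simp add: mx_def i_def j_def)
          have mx1: "mx > a N1" using False by (auto simp: mx_def)
          define M where "M = (LEAST M. mx \<le> a M)"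
          have M1: "mx \<le> a M" unfolding M_def by (rule LeastI[of _ N]) (rule mxN)
          have MN: "M \<le> N" unfolding M_def by (rule Least_le) (rule mxN)
          have MN1: "M > N1"
          proof (rule ccontr)
            assume "\<not> M > N1"
            then have "a M \<le> a N1" using amono by (simp add: strict_mono_less_eq)
            then show False using M1 mx1 by simp
          qed
          have Mpos: "M \<ge> 1" using MN1 by simp
          have M2: "\<not> mx \<le> a (M - 1)"
            unfolding M_def by (rule not_less_Least) (use Mpos M_def in simp)
          have "M \<ge> N0" using MN1 by (simp add: N1_def)
          then have "dist_int (\<alpha> * x i - \<alpha> * x j) \<ge> \<eta> M"
            using N0[of M] iS jS ij M1 M2 by (auto simp: mx_def)
          moreover have "\<eta> N \<le> \<eta> M" using MN by (rule eta_anti')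
          ultimately show ?thesis using CetaN2 by linarith
        qed
        then show "dist_int (\<alpha> * x (nk k) - \<alpha> * x (nk l)) \<ge> C / (real (a N) * ln (real (a N)) powr (1 + \<epsilon>))"
          unfolding goal_eq by (simp add: i_def j_def)
      qed
    qed
  qed
  show ?thesis
  proof (rule exI[of _ nk], rule exI[of _ a], intro conjI)
    show "strict_mono_on {1..} nk" by (rule nk_mono)
    show "strict_mono_on {1..} a" using amono by (auto simp: strict_mono_on_def strict_mono_def)
    show "nk 1 \<ge> 1" using S2[OF nkS[of 1]] by simp
    show "a 1 \<ge> 1" using a3 by (metis le_trans one_le_numeral)
    show "\<exists>c' > 0. \<forall>N \<ge> 1. real (card {k. k \<ge> 1 \<and> nk k \<le> a N}) \<ge> c' * real (a N)"
      using dens c1 by blast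
    show "\<forall>\<epsilon> > 0. AE \<alpha> in lborel. \<exists>C > 0. \<forall>N \<ge> 1. \<forall>k \<ge> 1. \<forall>l \<ge> 1.
          k \<noteq> l \<longrightarrow> nk k \<le> a N \<longrightarrow> nk l \<le> a N \<longrightarrow>
          dist_int (\<alpha> * x (nk k) - \<alpha> * x (nk l))
            \<ge> C / (real (a N) * ln (real (a N)) powr (1 + \<epsilon>))" using metric by blast
  qed
qed

end
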